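(* Let $G$ be a graph, with vertices labelled $1,\dots,n$, and let $F$ be an easy graph fibration with $F(G)\neq\emptyset$. Let $\mathscr{C}=\{(K,\mathbf{a},\mathbf{b})\mid (K,g_{\mathbf{a}}^{-1}g_{\mathbf{b}})\in F\}$ be the associated group-theoretical graph category, and let $\mathbb{G}$ be the orthogonal compact matrix quantum group whose intertwiner spaces are $\mathrm{span}\{T^G_{\mathbf{K}}\mid \mathbf{K}\in\mathscr{C}(k,l)\}$, $k,l\in\mathbb{N}_0$. Then $$\mathbb{G}=\hat\Gamma\rtimes\mathrm{Aut}\,G,\qquad \Gamma=\mathbb{Z}_2^{*V(G)}/F(G).$$
   Context: Graphs are finite, undirected, without multiple edges, loops allowed, up to isomorphism; graph homomorphisms map edges (including loops) to edges. $\mathbb{Z}_2^{*V}$ is the group generated by the set $V$ subject to $v^2=e$; for a tuple $\mathbf{a}$ of elements of $V$, $g_{\mathbf{a}}$ is the product of its entries; maps of sets induce maps on tuples and homomorphisms of these groups. For a partition $\pi$ of $V(K)$, $K/\pi$ has the blocks as vertices with an edge between two (possibly equal) blocks iff $K$ has an edge between some of their elements; $q_\pi$ the quotient map. A vertex overlap of graphs $K,H$ is a subset $f\subset V(K)\times V(H)$ with each vertex occurring at most once; $K\cup_fH$ is the quotient of $K\sqcup H$ identifying $v,w$ for $(v,w)\in f$; $f_K,f_H$ the induced maps. A graph fibration is a set $F$ of pairs $(K,a)$, $a\in\mathbb{Z}_2^{*V(K)}$, up to $(K,a)\equiv(K',\phi(a))$ for isomorphisms $\phi$, with $(N_0,e),(N_1,e)\in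 F$ ($N_k$ the edgeless graph on $k$ vertices), such that: (F1) $F(K):=\{a\mid(K,a)\in F\}$ is empty or a normal subgroup of $\mathbb{Z}_2^{*V(K)}$; (F2) $F(K)$ is invariant under automorphisms of $K$; (F3) $(K,a),(H,b)\in F$ implies $(K\cup_fH,f_K(a)f_H(b))\in F$ for every vertex overlap $f$. It is easy if (F4): $F(K)\ne\emptyset$ implies $q_\pi(F(K))\subset F(K/\pi)$ for every partition $\pi$ of $V(K)$. Bilabelled graph: $\mathbf{K}=(K,\mathbf{a},\mathbf{b})$, $\mathbf{a}\in V(K)^k$, $\mathbf{b}\in V(K)^l$, up to isomorphism; $\mathscr{C}(k,l)$ are those with $k$ inputs and $l$ outputs. For such $\mathbf{K}$, $T^G_{\mathbf{K}}\colon(\mathbb{C}^n)^{\otimes k}\to(\mathbb{C}^n)^{\otimes l}$ has entries $[T^G_{\mathbf{K}}]_{\mathbf{j}\mathbf{i}}=\#\{\phi\colon K\to G \text{ homomorphism}\mid \phi(\mathbf{a})=\mathbf{i},\phi(\mathbf{b})=\mathbf{j}\}$ (the coefficient of $e_{j_1}\otimes\cdots\otimes e_{j_l}$ in the image of $e_{i_1}\otimes\cdots\otimes e_{i_k}$). Quantum groups: an orthogonal compact matrix quantum group is a pair $(A,u)$, $A$ a $*$-algebra generated by the entries of $u\in M_n(A)$, with $u_{ij}=u_{ij}^*$, $uu^t=u^tu=1$, and $u_{ij}\mapsto\sum_k u_{ik}\otimes u_{kj}$ extending to a $*$-homomorphism $A\to A\otimes A$; its intertwiner spaces are $\mathrm{Mor}(u^{\otimes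 k},u^{\otimes l})=\{T\mid Tu^{\otimes k}=u^{\otimes l}T\}$. By Woronowicz–Tannaka–Krein duality such a quantum group is uniquely determined by its intertwiner spaces. A permutation group $H\subset S_n$ is the quantum group $(O(H),v)$ with $v_{ij}(\sigma)=\delta_{i\sigma(j)}$; here $\mathrm{Aut}\,G\subset S_n$ via the labelling. If $\Gamma$ is a quotient of $\mathbb{Z}_2^{*n}$ by an $H$-invariant normal subgroup, with $\gamma_i\in\mathbb{C}\Gamma$ the images of the generators, then $\hat\Gamma\rtimes H$ is the quantum group $(\mathbb{C}\Gamma\otimes O(H),u)$ with $u_{ij}=\gamma_i\otimes v_{ij}$. *)

theory Defs
  imports Complex_Main "HOL-Library.FuncSet" "HOL-Combinatorics.Permutations"
begin

text \<open>Vertices are natural numbers; since everything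
  is considered up to isomorphism, this captures all finite graphs.\<close>

type_synonym graph = "nat set \<times> (nat \<times> nat) set"

abbreviation V :: "graph \<Rightarrow> nat set" where "V K \<equiv> fst K"
abbreviation E :: "graph \<Rightarrow> (nat \<times> nat) set" where "E K \<equiv> snd K"

definition wf_graph :: "graph \<Rightarrow> bool" where
  "wf_graph K \<longleftrightarrow> finite (V K) \<and> E K \<subseteq> V K \<times> V K
     \<and> (\<forall>x y. (x, y) \<in> E K \<longrightarrow> (y, x) \<in> E K)"

definition graph_iso :: "(nat \<Rightarrow> nat) \<Rightarrow> graph \<Rightarrow> graph \<Rightarrow> bool" where
  "graph_iso \<phi> K K' \<longleftrightarrow> bij_betw \<phi> (V K) (V K')
     \<and> (\<forall>x\<in>V K. \<forall>y\<in>V K. (x, y) \<in> E K \<longleftrightarrow> (\<phi> x, \<phi> y) \<in> E K')"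

definition N0 :: graph where "N0 = ({}, {})"
definition N1 :: graph where "N1 = ({0}, {})"

definition map_edges :: "(nat \<Rightarrow> nat) \<Rightarrow> (nat \<times> nat) set \<Rightarrow> (nat \<times> nat) set" where
  "map_edges q R = {(q x, q y) | x y. (x, y) \<in> R}"

text \<open>Image graph of K under a map q; for q restricted to V(K) this is
  (isomorphic to) the quotient K/\<pi> where \<pi> is the partition of V(K) into the
  fibres of q. Every partition arises this way.\<close>
definition quot_graph :: "(nat \<Rightarrow> nat) \<Rightarrow> graph \<Rightarrow> graph" where
  "quot_graph q K = (q ` V K, map_edges q (E K))"

text \<open>An element of Z_2^{*V} is represented by its unique reduced word
  (no two equal adjacent letters). red reduces an arbitrary word.\<close>

fun push :: "'a \<Rightarrow> 'a list \<Rightarrow> 'a list" where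
  "push x [] = [x]"
| "push x (y # ys) = (if x = y then ys else x # y # ys)"

definition red :: "'a list \<Rightarrow> 'a list" where
  "red xs = foldr push xs []"

definition fwords :: "'a set \<Rightarrow> 'a list set" where
  "fwords A = {w. set w \<subseteq> A \<and> red w = w}"

text \<open>Group operations: product = red (a @ b), inverse = rev a, unit = [].
  The homomorphism induced by a map of sets q is  a \<mapsto> red (map q a).\<close>

definition normal_sub :: "'a set \<Rightarrow> 'a list set \<Rightarrow> bool" where
  "normal_sub A N \<longleftrightarrow> N \<subseteq> fwords A \<and> [] \<in> N
     \<and> (\<forall>a\<in>N. \<forall>b\<in>N. red (a @ b) \<in> N)
     \<and> (\<forall>a\<in>N. rev a \<in> N)
     \<and> (\<forall>a\<in>N. \<forall>g\<in>fwords A. red (rev g @ a @ g) \<in> N)"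

type_synonym fibration = "(graph \<times> nat list) set"

definition Fib :: "fibration \<Rightarrow> graph \<Rightarrow> nat list set" where
  "Fib F K = {a. (K, a) \<in> F}"

definition vertex_overlap :: "(nat \<times> nat) set \<Rightarrow> graph \<Rightarrow> graph \<Rightarrow> bool" where
  "vertex_overlap f K H \<longleftrightarrow> f \<subseteq> V K \<times> V H
     \<and> (\<forall>v w v' w'. (v, w) \<in> f \<and> (v', w') \<in> f \<longrightarrow> (v = v' \<longleftrightarrow> w = w'))"

text \<open>Concrete representative of K \<union>_f H: vertex v of K becomes 2v, vertex w of H
  becomes 2v if (v,w) \<in> f and 2w+1 otherwise.\<close>
definition ovK :: "nat \<Rightarrow> nat" where "ovK v = 2 * v"
definition ovH :: "(nat \<times> nat) set \<Rightarrow> nat \<Rightarrow> nat" where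
  "ovH f w = (if \<exists>v. (v, w) \<in> f then 2 * (THE v. (v, w) \<in> f) else 2 * w + 1)"

definition glue :: "(nat \<times> nat) set \<Rightarrow> graph \<Rightarrow> graph \<Rightarrow> graph" where
  "glue f K H = (ovK ` V K \<union> ovH f ` V H, map_edges ovK (E K) \<union> map_edges (ovH f) (E H))"

definition graph_fibration :: "fibration \<Rightarrow> bool" where
  "graph_fibration F \<longleftrightarrow>
     \<comment> \<open>elements are pairs (K,a) with a \<in> Z_2^{*V(K)}\<close>
     (\<forall>K a. (K, a) \<in> F \<longrightarrow> wf_graph K \<and> a \<in> fwords (V K))
     \<comment> \<open>F is a set of isomorphism classes\<close>
   \<and> (\<forall>K K' \<phi> a. (K, a) \<in> F \<and> wf_graph K' \<and> graph_iso \<phi> K K'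
        \<longrightarrow> (K', red (map \<phi> a)) \<in> F)
   \<and> (N0, []) \<in> F \<and> (N1, []) \<in> F
     \<comment> \<open>(F1)\<close>
   \<and> (\<forall>K. wf_graph K \<longrightarrow> Fib F K = {} \<or> normal_sub (V K) (Fib F K))
     \<comment> \<open>(F2)\<close>
   \<and> (\<forall>K \<phi>. wf_graph K \<and> graph_iso \<phi> K K
        \<longrightarrow> (\<lambda>a. red (map \<phi> a)) ` Fib F K \<subseteq> Fib F K)
     \<comment> \<open>(F3)\<close>
   \<and> (\<forall>K H a b f. (K, a) \<in> F \<and> (H, b) \<in> F \<and> vertex_overlap f K H
        \<longrightarrow> (glue f K H, red (map ovK a @ map (ovH f) b)) \<in> F)"

definition easy_fibration :: "fibration \<Rightarrow> bool" where
  "easy_fibration F \<longleftrightarrow>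
     (\<forall>K q. wf_graph K \<and> Fib F K \<noteq> {}
        \<longrightarrow> (\<lambda>a. red (map q a)) ` Fib F K \<subseteq> Fib F (quot_graph q K))"

text \<open>The category C(k,l): bilabelled graphs (K,a,b) with (K, g_a^{-1} g_b) \<in> F.
  Since each generator is an involution, g_a^{-1} g_b = red (rev a @ b).\<close>
definition Ccat :: "fibration \<Rightarrow> nat \<Rightarrow> nat \<Rightarrow> (graph \<times> nat list \<times> nat list) set" where
  "Ccat F k l = {(K, a, b). wf_graph K \<and> length a = k \<and> length b = l
      \<and> set a \<subseteq> V K \<and> set b \<subseteq> V K \<and> (K, red (rev a @ b)) \<in> F}"

definition homs :: "graph \<Rightarrow> graph \<Rightarrow> (nat \<Rightarrow> nat) set" where
  "homs K G = {\<phi> \<in> extensional (V K). (\<forall>x\<in>V K. \<phi> x \<in> V G)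
      \<and> (\<forall>x y. (x, y) \<in> E K \<longrightarrow> (\<phi> x, \<phi> y) \<in> E G)}"

text \<open>Linear maps (C^n)^{\<otimes>k} \<rightarrow> (C^n)^{\<otimes>l} are represented by their matrices
  T j i (row multi-index j of length l, column multi-index i of length k,
  entries in {1..n}); entries outside that range are required to be 0.\<close>
type_synonym mat = "nat list \<Rightarrow> nat list \<Rightarrow> complex"

definition Tmat :: "graph \<Rightarrow> graph \<Rightarrow> nat list \<Rightarrow> nat list \<Rightarrow> mat" where
  "Tmat G K a b = (\<lambda>j i. of_nat (card {\<phi> \<in> homs K G. map \<phi> a = i \<and> map \<phi> b = j}))"

definition idx :: "nat \<Rightarrow> nat \<Rightarrow> nat list set" where
  "idx n k = {xs. length xs = k \<and> set xs \<subseteq> {1..n}}"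

definition cspan :: "mat set \<Rightarrow> mat set" where
  "cspan S = {T. \<exists>X c. finite X \<and> X \<subseteq> S \<and> T = (\<lambda>j i. \<Sum>M\<in>X. c M * M j i)}"

definition AutG :: "graph \<Rightarrow> nat \<Rightarrow> (nat \<Rightarrow> nat) set" where
  "AutG G n = {\<sigma>. \<sigma> permutes {1..n} \<and> (\<forall>x y. (x, y) \<in> E G \<longleftrightarrow> (\<sigma> x, \<sigma> y) \<in> E G)}"

text \<open>\<Gamma> = Z_2^{*V}/N: the element of \<Gamma> represented by the word w is its coset.\<close>
definition gclass :: "nat list set \<Rightarrow> nat list \<Rightarrow> nat list set" where
  "gclass N w = (\<lambda>x. red (w @ x)) ` N"

text \<open>Elements of the algebra C\<Gamma> \<otimes> O(H) \<cong> (C\<Gamma>)^H are represented as functions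
  \<sigma> \<mapsto> (element of C\<Gamma> as coefficient function \<Gamma> \<rightarrow> C).
  The entry (u^{\<otimes>k})_{m,i} = u_{m_1 i_1}\<cdots>u_{m_k i_k} = \<gamma>_{m_1}\<cdots>\<gamma>_{m_k} \<otimes> v_{m_1 i_1}\<cdots>v_{m_k i_k},
  with v_{ij}(\<sigma>) = \<delta>_{i,\<sigma>(j)}.\<close>
definition ucoef :: "nat list set \<Rightarrow> (nat \<Rightarrow> nat) set \<Rightarrow> nat list \<Rightarrow> nat list
    \<Rightarrow> (nat \<Rightarrow> nat) \<Rightarrow> nat list set \<Rightarrow> complex" where
  "ucoef N H m i = (\<lambda>\<sigma> c. if \<sigma> \<in> H \<and> m = map \<sigma> i \<and> c = gclass N m then 1 else 0)"

text \<open>Mor(u^{\<otimes>k}, u^{\<otimes>l}) = {T | T u^{\<otimes>k} = u^{\<otimes>l} T} for the quantum group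
  \<Gamma>^ \<rtimes> H, \<Gamma> = Z_2^{*n}/N, acting on C^n.\<close>
definition intertw :: "nat list set \<Rightarrow> (nat \<Rightarrow> nat) set \<Rightarrow> nat \<Rightarrow> nat \<Rightarrow> nat \<Rightarrow> mat set" where
  "intertw N H n k l = {T.
     (\<forall>j i. T j i \<noteq> 0 \<longrightarrow> j \<in> idx n l \<and> i \<in> idx n k)
   \<and> (\<forall>j\<in>idx n l. \<forall>i\<in>idx n k.
        (\<lambda>\<sigma> c. \<Sum>m\<in>idx n k. T j m * ucoef N H m i \<sigma> c)
      = (\<lambda>\<sigma> c. \<Sum>p\<in>idx n l. ucoef N H j p \<sigma> c * T p i))}"

end

theory Submission
  imports Defs
begin



fun rdd :: "'a list \<Rightarrow> bool" where
  "rdd [] = True" | "rdd [x] = True" | "rdd (x # y # ys) = (x \<noteq> y \<and> rdd (y # ys))"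

lemma red_Nil[simp]: "red [] = []" by (simp add: red_def)
lemma red_Cons: "red (x # xs) = push x (red xs)" by (simp add: red_def)

lemma rdd_tl: "rdd (x # xs) \<Longrightarrow> rdd xs"
  by (cases xs) auto

lemma rdd_push: "rdd w \<Longrightarrow> rdd (push x w)"
  by (cases w rule: rdd.cases) (auto dest: rdd_tl)

lemma rdd_red: "rdd (red w)"
  by (induction w) (auto simp: red_Cons rdd_push)

lemma rdd_red_id: "rdd w \<Longrightarrow> red w = w"
  by (induction w rule: rdd.induct) (auto simp: red_Cons)

lemma red_red[simp]: "red (red w) = red w"
  using rdd_red rdd_red_id by blast

lemma push_push: "rdd w \<Longrightarrow> push x (push x w) = w"
  by (cases w rule: rdd.cases) auto

lemma rdd_foldr: "rdd w \<Longrightarrow> rdd (foldr push xs w)"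
  by (induction xs) (auto simp: rdd_push)

lemma foldr_push_push: "rdd r \<Longrightarrow> rdd w \<Longrightarrow> foldr push (push x r) w = push x (foldr push r w)"
proof (cases r)
  case Nil then show ?thesis by simp
next
  case (Cons y ys)
  assume "rdd r" "rdd w"
  show ?thesis
  proof (cases "x = y")
    case True
    have "rdd (foldr push ys w)" using \<open>rdd w\<close> by (rule rdd_foldr)
    then show ?thesis using Cons True by (simp add: push_push)
  qed (use Cons in simp)
qed

lemma foldr_red: "rdd w \<Longrightarrow> foldr push (red xs) w = foldr push xs w"
  by (induction xs) (simp_all add: red_Cons foldr_push_push rdd_red)

lemma red_append: "red (xs @ ys) = foldr push xs (red ys)"
  by (simp add: red_def)

lemma red_append_red2[simp]: "red (xs @ red ys) = red (xs @ ys)"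
  by (simp add: red_append)

lemma red_append_red1[simp]: "red (red xs @ ys) = red (xs @ ys)"
  by (simp add: red_append foldr_red rdd_red)

lemma red_cancel: "red (ys @ x # x # zs) = red (ys @ zs)"
proof -
  have "red (x # x # zs) = red zs" by (simp add: red_Cons push_push rdd_red)
  then have "red (ys @ x # x # zs) = red (ys @ red zs)"
    by (metis red_append_red2)
  then show ?thesis by simp
qed

lemma red_rev_self: "red (rev xs @ xs @ ys) = red ys"
proof (induction xs arbitrary: ys)
  case Nil then show ?case by simp
next
  case (Cons x xs)
  have "red (rev (x # xs) @ (x # xs) @ ys) = red (rev xs @ x # x # (xs @ ys))" by simp
  also have "\<dots> = red (rev xs @ xs @ ys)" by (rule red_cancel)
  finally show ?case using Cons by simp
qed

lemma red_self_rev: "red (xs @ rev xs @ ys) = red ys"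
  using red_rev_self[of "rev xs"] by simp

lemma rdd_iff: "rdd w \<longleftrightarrow> (\<forall>k. Suc k < length w \<longrightarrow> w ! k \<noteq> w ! Suc k)"
proof (induction w rule: rdd.induct)
  case (3 x y ys)
  have "(\<forall>k. Suc k < length (x # y # ys) \<longrightarrow> (x # y # ys) ! k \<noteq> (x # y # ys) ! Suc k)
    \<longleftrightarrow> x \<noteq> y \<and> (\<forall>k. Suc k < length (y # ys) \<longrightarrow> (y # ys) ! k \<noteq> (y # ys) ! Suc k)"
    (is "?L \<longleftrightarrow> ?R")
  proof
    assume L: ?L
    have "x \<noteq> y" using L[rule_format, of 0] by simp
    moreover have "\<forall>k. Suc k < length (y # ys) \<longrightarrow> (y # ys) ! k \<noteq> (y # ys) ! Suc k"
    proof (intro allI impI)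
      fix k assume "Suc k < length (y # ys)"
      then show "(y # ys) ! k \<noteq> (y # ys) ! Suc k" using L[rule_format, of "Suc k"] by simp
    qed
    ultimately show ?R by blast
  next
    assume R: ?R
    show ?L
    proof (intro allI impI)
      fix k assume k: "Suc k < length (x # y # ys)"
      show "(x # y # ys) ! k \<noteq> (x # y # ys) ! Suc k"
      proof (cases k)
        case 0 then show ?thesis using R by simp
      next
        case (Suc k') then show ?thesis using R k by simp
      qed
    qed
  qed
  then show ?case using 3 by simp
qed auto

lemma rdd_rev: "rdd w \<Longrightarrow> rdd (rev w)"
  unfolding rdd_iff
proof (intro allI impI)
  fix k assume H: "\<forall>k. Suc k < length w \<longrightarrow> w ! k \<noteq> w ! Suc k" and k: "Suc k < length (rev w)"
  have "w ! (length w - Suc (Suc k)) \<noteq> w ! Suc (length w - Suc (Suc k))"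
    using H k by simp
  moreover have "Suc (length w - Suc (Suc k)) = length w - Suc k" using k by simp
  ultimately show "rev w ! k \<noteq> rev w ! Suc k" using k by (simp add: rev_nth)
qed

lemma red_rev: "red (rev xs) = rev (red xs)"
proof -
  have r: "red (red xs @ rev (red xs)) = []" using red_self_rev[of "red xs" "[]"] by simp
  have "red (rev xs) = red (rev xs @ red (red xs @ rev (red xs)))"
    using r by simp
  also have "\<dots> = red ((rev xs @ red xs) @ rev (red xs))"
    by (simp only: red_append_red2 append_assoc)
  also have "\<dots> = red (red (rev xs @ red xs) @ rev (red xs))"
    by (simp only: red_append_red1)
  also have "red (rev xs @ red xs) = []"
    using red_rev_self[of xs "[]"] by (simp only: red_append_red2 append_Nil2 red_Nil)
  finally show ?thesis by (simp add: rdd_red_id rdd_rev rdd_red)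
qed

lemma red_map_push: "red (map q (push x r)) = red (q x # map q r)"
proof (cases r)
  case (Cons y ys)
  then show ?thesis by (auto simp: red_Cons push_push rdd_red)
qed simp

lemma red_map_red[simp]: "red (map q (red xs)) = red (map q xs)"
  by (induction xs) (simp_all add: red_Cons red_map_push)

lemma red_eq_iff_rdd: "red w = w \<longleftrightarrow> rdd w"
  by (metis rdd_red rdd_red_id)




lemma fib_wf:
  assumes "graph_fibration F" "(K, a) \<in> F"
  shows "wf_graph K" "a \<in> fwords (V K)"
  using assms(1)[unfolded graph_fibration_def, THEN conjunct1] assms(2) by blast+

lemma fib_normal:
  assumes "graph_fibration F" "wf_graph K" "Fib F K \<noteq> {}"
  shows "normal_sub (V K) (Fib F K)"
  using assms(1)[unfolded graph_fibration_def, THEN conjunct2, THEN conjunct2, THEN conjunct2,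
      THEN conjunct2, THEN conjunct1] assms(2,3) by blast

lemma fib_iso:
  assumes "graph_fibration F" "(K, a) \<in> F" "wf_graph K'" "graph_iso \<phi> K K'"
  shows "(K', red (map \<phi> a)) \<in> F"
  using assms(1)[unfolded graph_fibration_def, THEN conjunct2, THEN conjunct1] assms(2-) by blast

lemma fib_glue:
  assumes "graph_fibration F" "(K, a) \<in> F" "(H, b) \<in> F" "vertex_overlap f K H"
  shows "(glue f K H, red (map ovK a @ map (ovH f) b)) \<in> F"
  using assms(1)[unfolded graph_fibration_def, THEN conjunct2, THEN conjunct2, THEN conjunct2,
      THEN conjunct2, THEN conjunct2, THEN conjunct2] assms(2-) by blast

lemma fwords_red: "a \<in> fwords A \<Longrightarrow> red a = a" by (simp add: fwords_def)
lemma fwords_set: "a \<in> fwords A \<Longrightarrow> set a \<subseteq> A" by (simp add: fwords_def)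

lemma glue_sub:
  assumes gf: "graph_fibration F" and G: "wf_graph G" and GN: "(G, []) \<in> F"
    and Q: "(Q, x) \<in> F" and VQ: "V Q \<subseteq> V G" and EQ: "E Q \<subseteq> E G"
  shows "(G, x) \<in> F"
proof -
  define f where "f = {(v, v) | v. v \<in> V Q}"
  have wfQ: "wf_graph Q" and xw: "x \<in> fwords (V Q)" using fib_wf[OF gf Q] by auto
  have ov: "vertex_overlap f Q G" using VQ unfolding vertex_overlap_def f_def by auto
  have ovH: "ovH f w = (if w \<in> V Q then 2 * w else 2 * w + 1)" for w
  proof -
    have e: "(\<exists>v. (v, w) \<in> f) \<longleftrightarrow> w \<in> V Q" unfolding f_def by blast
    have t: "w \<in> V Q \<Longrightarrow> (THE v. (v, w) \<in> f) = w"
      by (rule the_equality) (auto simp: f_def)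
    show ?thesis unfolding ovH_def e using t by simp
  qed
  have psi: "ovH f w div 2 = w" for w by (simp add: ovH)
  have ovKH: "w \<in> V Q \<Longrightarrow> ovK w = ovH f w" for w by (simp add: ovH ovK_def)
  have EQV: "E Q \<subseteq> V Q \<times> V Q" using wfQ by (simp add: wf_graph_def)
  have gl: "glue f Q G = (ovH f ` V G, map_edges (ovH f) (E G))"
  proof -
    have "ovK ` V Q \<subseteq> ovH f ` V G" using VQ ovKH by auto
    moreover have "map_edges ovK (E Q) \<subseteq> map_edges (ovH f) (E G)"
    proof
      fix p assume "p \<in> map_edges ovK (E Q)"
      then obtain a b where p: "p = (ovK a, ovK b)" "(a, b) \<in> E Q" unfolding map_edges_def by auto
      then have "a \<in> V Q" "b \<in> V Q" using EQV by auto
      then show "p \<in> map_edges (ovH f) (E G)" using p EQ ovKH unfolding map_edges_def by auto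
    qed
    ultimately show ?thesis unfolding glue_def by (simp add: Un_absorb1)
  qed
  have F1: "(glue f Q G, red (map ovK x @ map (ovH f) [])) \<in> F"
    by (rule fib_glue[OF gf Q GN ov])
  have eq: "map ovK x = map (ovH f) x" unfolding map_eq_conv using fwords_set[OF xw] ovKH by blast
  have F2: "(glue f Q G, red (map (ovH f) x)) \<in> F" using F1 unfolding eq by simp
  have iso: "graph_iso (\<lambda>m. m div 2) (glue f Q G) G"
    unfolding graph_iso_def gl
  proof (intro conjI ballI)
    show "bij_betw (\<lambda>m. m div 2) (fst (ovH f ` V G, map_edges (ovH f) (E G))) (V G)"
    proof -
      have "inj_on (\<lambda>m. m div 2) (ovH f ` V G)"
        by (rule inj_onI) (clarsimp simp: psi)
      moreover have "(\<lambda>m. m div 2) ` ovH f ` V G = V G"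
        by (simp add: image_image psi)
      ultimately show ?thesis by (simp add: bij_betw_def)
    qed
  next
    fix x y assume "x \<in> fst (ovH f ` V G, map_edges (ovH f) (E G))"
      "y \<in> fst (ovH f ` V G, map_edges (ovH f) (E G))"
    then obtain a b where ab: "x = ovH f a" "y = ovH f b" by auto
    have inj: "ovH f c = ovH f d \<Longrightarrow> c = d" for c d using psi by (metis)
    have "(ovH f a, ovH f b) \<in> map_edges (ovH f) (E G) \<longleftrightarrow> (a, b) \<in> E G"
      unfolding map_edges_def by (blast dest: inj)
    then show "((x, y) \<in> snd (ovH f ` V G, map_edges (ovH f) (E G))) = ((x div 2, y div 2) \<in> E G)"
      unfolding ab psi by simp
  qed
  have "(G, red (map (\<lambda>m. m div 2) (red (map (ovH f) x)))) \<in> F"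
    by (rule fib_iso[OF gf F2 G iso])
  moreover have "red (map (\<lambda>m. m div 2) (red (map (ovH f) x))) = x"
    using psi fwords_red[OF xw] by (simp add: comp_def)
  ultimately show ?thesis by simp
qed




definition Imat :: "graph \<Rightarrow> graph \<Rightarrow> nat list \<Rightarrow> nat list \<Rightarrow> mat" where
  "Imat G K a b = (\<lambda>j i. of_nat (card {\<phi> \<in> homs K G. inj_on \<phi> (V K) \<and> map \<phi> a = i \<and> map \<phi> b = j}))"

definition RR :: "graph \<Rightarrow> (nat \<Rightarrow> nat) set" where
  "RR K = {r \<in> extensional (V K). \<forall>v\<in>V K. r v \<in> V K \<and> r v \<le> v \<and> r (r v) = r v}"

definition kr :: "graph \<Rightarrow> (nat \<Rightarrow> nat) \<Rightarrow> nat \<Rightarrow> nat" where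
  "kr K \<phi> = restrict (\<lambda>v. Min {w \<in> V K. \<phi> w = \<phi> v}) (V K)"

lemma RR_min:
  assumes "r \<in> RR K" "v \<in> V K" "finite (V K)"
  shows "Min {w \<in> V K. r w = r v} = r v"
proof (rule Min_eqI)
  show "finite {w \<in> V K. r w = r v}" using assms by simp
  show "r v \<in> {w \<in> V K. r w = r v}" using assms by (simp add: RR_def)
  fix y assume "y \<in> {w \<in> V K. r w = r v}"
  then show "r v \<le> y" using assms(1) by (auto simp: RR_def)
qed

lemma finite_RR: "finite (V K) \<Longrightarrow> finite (RR K)"
proof -
  assume f: "finite (V K)"
  have "RR K \<subseteq> PiE (V K) (\<lambda>_. V K)" unfolding RR_def by (auto simp: PiE_def)
  then show ?thesis using finite_PiE[OF f, of "\<lambda>_. V K"] f by (blast intro: finite_subset)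
qed

lemma kr_mem:
  assumes "finite (V K)" "v \<in> V K"
  shows "kr K \<phi> v \<in> V K" "\<phi> (kr K \<phi> v) = \<phi> v" "kr K \<phi> v \<le> v"
proof -
  have ne: "v \<in> {w \<in> V K. \<phi> w = \<phi> v}" using assms by simp
  have f: "finite {w \<in> V K. \<phi> w = \<phi> v}" using assms by simp
  have "Min {w \<in> V K. \<phi> w = \<phi> v} \<in> {w \<in> V K. \<phi> w = \<phi> v}"
    using Min_in[OF f] ne by blast
  then show "kr K \<phi> v \<in> V K" "\<phi> (kr K \<phi> v) = \<phi> v" using assms by (auto simp: kr_def)
  show "kr K \<phi> v \<le> v" using Min_le[OF f ne] assms by (simp add: kr_def)
qed

lemma kr_eq:
  assumes "finite (V K)" "v \<in> V K" "w \<in> V K"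
  shows "kr K \<phi> v = kr K \<phi> w \<longleftrightarrow> \<phi> v = \<phi> w"
proof
  assume "kr K \<phi> v = kr K \<phi> w"
  then show "\<phi> v = \<phi> w" using kr_mem(2)[OF assms(1,2)] kr_mem(2)[OF assms(1,3)] by metis
next
  assume "\<phi> v = \<phi> w"
  then show "kr K \<phi> v = kr K \<phi> w" using assms by (simp add: kr_def)
qed

lemma kr_RR: "finite (V K) \<Longrightarrow> kr K \<phi> \<in> RR K"
  unfolding RR_def
proof (intro CollectI conjI ballI)
  assume f: "finite (V K)"
  show "kr K \<phi> \<in> extensional (V K)" by (simp add: kr_def)
  fix v assume v: "v \<in> V K"
  show "kr K \<phi> v \<in> V K" "kr K \<phi> v \<le> v" using kr_mem[OF f v] by auto
  show "kr K \<phi> (kr K \<phi> v) = kr K \<phi> v"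
    using kr_eq[OF f kr_mem(1)[OF f v] v] kr_mem(2)[OF f v] by blast
qed

lemma homs_finite: "finite (V K) \<Longrightarrow> finite (V G) \<Longrightarrow> finite (homs K G)"
proof -
  assume f: "finite (V K)" "finite (V G)"
  have "homs K G \<subseteq> PiE (V K) (\<lambda>_. V G)" unfolding homs_def by (auto simp: PiE_def)
  then show ?thesis using finite_PiE[OF f(1), of "\<lambda>_. V G"] f by (blast intro: finite_subset)
qed

lemma wf_edges: "wf_graph K \<Longrightarrow> (x, y) \<in> E K \<Longrightarrow> x \<in> V K \<and> y \<in> V K"
  unfolding wf_graph_def by blast

lemma fiber_bij:
  assumes K: "wf_graph K" and G: "wf_graph G" and r: "r \<in> RR K"
    and a: "set a \<subseteq> V K" and b: "set b \<subseteq> V K"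
  shows "card {\<phi> \<in> homs K G. map \<phi> a = i \<and> map \<phi> b = j \<and> kr K \<phi> = r}
       = card {\<psi> \<in> homs (quot_graph r K) G. inj_on \<psi> (r ` V K) \<and> map \<psi> (map r a) = i \<and> map \<psi> (map r b) = j}"
proof -
  have fK: "finite (V K)" using K by (simp add: wf_graph_def)
  have rV: "v \<in> V K \<Longrightarrow> r v \<in> V K" for v using r by (simp add: RR_def)
  have rr: "v \<in> V K \<Longrightarrow> r (r v) = r v" for v using r by (simp add: RR_def)
  have rext: "r \<in> extensional (V K)" using r by (simp add: RR_def)
  have Vq: "V (quot_graph r K) = r ` V K" by (simp add: quot_graph_def)
  have Eq: "E (quot_graph r K) = map_edges r (E K)" by (simp add: quot_graph_def)
  show ?thesis
  proof (rule bij_betw_same_card[of "\<lambda>\<phi>. restrict \<phi> (r ` V K)"], rule bij_betw_byWitness[where f'="\<lambda>\<psi>. restrict (\<psi> \<circ> r) (V K)"])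
    show "\<forall>\<phi>\<in>{\<phi> \<in> homs K G. map \<phi> a = i \<and> map \<phi> b = j \<and> kr K \<phi> = r}.
        restrict (restrict \<phi> (r ` V K) \<circ> r) (V K) = \<phi>"
    proof (intro ballI ext)
      fix \<phi> x assume "\<phi> \<in> {\<phi> \<in> homs K G. map \<phi> a = i \<and> map \<phi> b = j \<and> kr K \<phi> = r}"
      then have h: "\<phi> \<in> homs K G" "kr K \<phi> = r" by auto
      show "restrict (restrict \<phi> (r ` V K) \<circ> r) (V K) x = \<phi> x"
        using h kr_mem(2)[OF fK, of x \<phi>] by (auto simp: homs_def extensional_def)
    qed
    show "\<forall>\<psi>\<in>{\<psi> \<in> homs (quot_graph r K) G. inj_on \<psi> (r ` V K) \<and> map \<psi> (map r a) = i \<and> map \<psi> (map r b) = j}.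
        restrict (restrict (\<psi> \<circ> r) (V K)) (r ` V K) = \<psi>"
    proof (intro ballI ext)
      fix \<psi> x assume "\<psi> \<in> {\<psi> \<in> homs (quot_graph r K) G. inj_on \<psi> (r ` V K) \<and> map \<psi> (map r a) = i \<and> map \<psi> (map r b) = j}"
      then have h: "\<psi> \<in> extensional (r ` V K)" by (simp add: homs_def Vq)
      show "restrict (restrict (\<psi> \<circ> r) (V K)) (r ` V K) x = \<psi> x"
      proof (cases "x \<in> r ` V K")
        case True then show ?thesis using rr rV by auto
      next
        case False
        then have "x \<notin> V K \<or> x \<notin> r ` V K" by blast
        then show ?thesis using False h by (auto simp: extensional_def)
      qed
    qed
    show "(\<lambda>\<phi>. restrict \<phi> (r ` V K)) ` {\<phi> \<in> homs K G. map \<phi> a = i \<and> map \<phi> b = j \<and> kr K \<phi> = r}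
        \<subseteq> {\<psi> \<in> homs (quot_graph r K) G. inj_on \<psi> (r ` V K) \<and> map \<psi> (map r a) = i \<and> map \<psi> (map r b) = j}"
    proof (rule subsetI)
      fix y assume "y \<in> (\<lambda>\<phi>. restrict \<phi> (r ` V K)) ` {\<phi> \<in> homs K G. map \<phi> a = i \<and> map \<phi> b = j \<and> kr K \<phi> = r}"
      then obtain \<phi> where y: "y = restrict \<phi> (r ` V K)" and h: "\<phi> \<in> homs K G" "map \<phi> a = i" "map \<phi> b = j" "r = kr K \<phi>"
        by blast
      have phr: "v \<in> V K \<Longrightarrow> \<phi> (r v) = \<phi> v" for v using kr_mem(2)[OF fK] h(4) by simp
      have hom: "restrict \<phi> (r ` V K) \<in> homs (quot_graph r K) G"
        unfolding homs_def Vq Eq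
      proof (intro CollectI conjI ballI allI impI)
        show "restrict \<phi> (r ` V K) \<in> extensional (r ` V K)" by simp
        fix x assume "x \<in> r ` V K"
        then show "restrict \<phi> (r ` V K) x \<in> V G" using h(1) rV by (auto simp: homs_def)
      next
        fix x y assume "(x, y) \<in> map_edges r (E K)"
        then obtain u w where uw: "x = r u" "y = r w" "(u, w) \<in> E K" by (auto simp: map_edges_def)
        then have "u \<in> V K" "w \<in> V K" using wf_edges[OF K] by auto
        then show "(restrict \<phi> (r ` V K) x, restrict \<phi> (r ` V K) y) \<in> E G"
          using uw h(1) phr by (auto simp: homs_def)
      qed
      have inj: "inj_on (restrict \<phi> (r ` V K)) (r ` V K)"
      proof (rule inj_onI)
        fix x y assume "x \<in> r ` V K" "y \<in> r ` V K" "restrict \<phi> (r ` V K) x = restrict \<phi> (r ` V K) y"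
        then obtain u w where "x = r u" "y = r w" "u \<in> V K" "w \<in> V K" "\<phi> (r u) = \<phi> (r w)" by auto
        then show "x = y" using kr_eq[OF fK, of u w \<phi>] phr h(4) by simp
      qed
      have rx: "restrict \<phi> (r ` V K) (r x) = \<phi> x" if x: "x \<in> V K" for x
      proof -
        have "r x \<in> r ` V K" using x by (rule imageI)
        then show ?thesis using phr[OF x] by simp
      qed
      have ma: "map (restrict \<phi> (r ` V K)) (map r a) = i"
        unfolding h(2)[symmetric] map_map by (rule map_cong[OF refl]) (use a rx in auto)
      have mb: "map (restrict \<phi> (r ` V K)) (map r b) = j"
        unfolding h(3)[symmetric] map_map by (rule map_cong[OF refl]) (use b rx in auto)
      show "y \<in> {\<psi> \<in> homs (quot_graph r K) G. inj_on \<psi> (r ` V K) \<and> map \<psi> (map r a) = i \<and> map \<psi> (map r b) = j}"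
        using hom inj ma mb y by blast
    qed
    show "(\<lambda>\<psi>. restrict (\<psi> \<circ> r) (V K)) ` {\<psi> \<in> homs (quot_graph r K) G. inj_on \<psi> (r ` V K) \<and> map \<psi> (map r a) = i \<and> map \<psi> (map r b) = j}
        \<subseteq> {\<phi> \<in> homs K G. map \<phi> a = i \<and> map \<phi> b = j \<and> kr K \<phi> = r}"
    proof (rule subsetI)
      fix y assume "y \<in> (\<lambda>\<psi>. restrict (\<psi> \<circ> r) (V K)) ` {\<psi> \<in> homs (quot_graph r K) G. inj_on \<psi> (r ` V K) \<and> map \<psi> (map r a) = i \<and> map \<psi> (map r b) = j}"
      then obtain \<psi> where y: "y = restrict (\<psi> \<circ> r) (V K)" and h: "\<psi> \<in> homs (quot_graph r K) G" "inj_on \<psi> (r ` V K)"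
        "map \<psi> (map r a) = i" "map \<psi> (map r b) = j" by blast
      let ?\<phi> = "restrict (\<psi> \<circ> r) (V K)"
      have hom: "?\<phi> \<in> homs K G"
        unfolding homs_def
      proof (intro CollectI conjI ballI allI impI)
        show "?\<phi> \<in> extensional (V K)" by simp
        fix x assume "x \<in> V K"
        then show "?\<phi> x \<in> V G" using h(1) by (auto simp: homs_def Vq)
      next
        fix x y assume e: "(x, y) \<in> E K"
        then have "x \<in> V K" "y \<in> V K" using wf_edges[OF K] by auto
        moreover have "(r x, r y) \<in> E (quot_graph r K)" using e by (auto simp: Eq map_edges_def)
        ultimately show "(?\<phi> x, ?\<phi> y) \<in> E G" using h(1) by (auto simp: homs_def)
      qed
      have kr: "kr K ?\<phi> = r"
      proof (rule ext)
        fix v show "kr K ?\<phi> v = r v"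
        proof (cases "v \<in> V K")
          case True
          have "{w \<in> V K. ?\<phi> w = ?\<phi> v} = {w \<in> V K. r w = r v}"
            using True h(2) rV by (auto simp: inj_on_def)
          then show ?thesis using True RR_min[OF r True fK] by (simp add: kr_def)
        next
          case False then show ?thesis using rext by (simp add: kr_def extensional_def)
        qed
      qed
      have ma: "map ?\<phi> a = i" using a h(3) by (auto simp: map_eq_conv)
      have mb: "map ?\<phi> b = j" using b h(4) by (auto simp: map_eq_conv)
      show "y \<in> {\<phi> \<in> homs K G. map \<phi> a = i \<and> map \<phi> b = j \<and> kr K \<phi> = r}"
        using hom kr ma mb y by blast
    qed
  qed
qed




lemma cspan_base: "M \<in> S \<Longrightarrow> M \<in> cspan S"
  unfolding cspan_def by (rule CollectI, rule exI[of _ "{M}"], rule exI[of _ "\<lambda>_. 1"]) simp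

lemma cspan_zero: "(\<lambda>j i. 0) \<in> cspan S"
  unfolding cspan_def by (rule CollectI, rule exI[of _ "{}"]) simp

lemma cspan_lin:
  assumes A: "A \<in> cspan S" and B: "B \<in> cspan S"
  shows "(\<lambda>j i. A j i + c * B j i) \<in> cspan S"
proof -
  obtain XA cA where XA: "finite XA" "XA \<subseteq> S" "A = (\<lambda>j i. \<Sum>M\<in>XA. cA M * M j i)"
    using A unfolding cspan_def by blast
  obtain XB cB where XB: "finite XB" "XB \<subseteq> S" "B = (\<lambda>j i. \<Sum>M\<in>XB. cB M * M j i)"
    using B unfolding cspan_def by blast
  define d where "d M = (if M \<in> XA then cA M else 0) + c * (if M \<in> XB then cB M else 0)" for M
  have "(\<lambda>j i. A j i + c * B j i) = (\<lambda>j i. \<Sum>M\<in>XA \<union> XB. d M * M j i)"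
  proof (intro ext)
    fix j i
    have pt: "d M * M j i = (if M \<in> XA then cA M * M j i else 0) + c * (if M \<in> XB then cB M * M j i else 0)" for M
      unfolding d_def by (cases "M \<in> XA"; cases "M \<in> XB") (simp_all add: algebra_simps)
    have "(\<Sum>M\<in>XA \<union> XB. d M * M j i)
        = (\<Sum>M\<in>XA \<union> XB. (if M \<in> XA then cA M * M j i else 0)) + (\<Sum>M\<in>XA \<union> XB. c * (if M \<in> XB then cB M * M j i else 0))"
      unfolding pt by (rule sum.distrib)
    also have "(\<Sum>M\<in>XA \<union> XB. c * (if M \<in> XB then cB M * M j i else 0)) = c * (\<Sum>M\<in>XA \<union> XB. (if M \<in> XB then cB M * M j i else 0))"
      by (rule sum_distrib_left[symmetric])
    also have "(\<Sum>M\<in>XA \<union> XB. (if M \<in> XA then cA M * M j i else 0)) = (\<Sum>M\<in>XA. cA M * M j i)"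
      using XA XB by (simp add: sum.inter_restrict[symmetric] Int_absorb2)
    also have "(\<Sum>M\<in>XA \<union> XB. (if M \<in> XB then cB M * M j i else 0)) = (\<Sum>M\<in>XB. cB M * M j i)"
      using XA XB by (simp add: sum.inter_restrict[symmetric] Int_absorb2)
    finally show "A j i + c * B j i = (\<Sum>M\<in>XA \<union> XB. d M * M j i)" using XA XB by simp
  qed
  then show ?thesis unfolding cspan_def using XA XB by blast
qed

lemma cspan_sum:
  assumes "finite I" "\<And>x. x \<in> I \<Longrightarrow> f x \<in> cspan S"
  shows "(\<lambda>j i. \<Sum>x\<in>I. f x j i) \<in> cspan S"
  using assms
proof (induction I rule: finite_induct)
  case empty then show ?case by (simp add: cspan_zero)
next
  case (insert x I)
  have "(\<lambda>j i. (\<Sum>y\<in>I. f y j i) + 1 * f x j i) \<in> cspan S"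
    using insert by (intro cspan_lin) auto
  then show ?case using insert by (simp add: add.commute)
qed

lemma cspan_scale: "A \<in> cspan S \<Longrightarrow> (\<lambda>j i. c * A j i) \<in> cspan S"
  using cspan_lin[OF cspan_zero, of A S c] by simp

lemma cspan_diff: "A \<in> cspan S \<Longrightarrow> B \<in> cspan S \<Longrightarrow> (\<lambda>j i. A j i - B j i) \<in> cspan S"
  using cspan_lin[of A S B "-1"] by simp

lemma hom_decomp:
  assumes K: "wf_graph K" and G: "wf_graph G" and a: "set a \<subseteq> V K" and b: "set b \<subseteq> V K"
  shows "Tmat G K a b j i = (\<Sum>r\<in>RR K. Imat G (quot_graph r K) (map r a) (map r b) j i)"
proof -
  have fK: "finite (V K)" using K by (simp add: wf_graph_def)
  have fG: "finite (V G)" using G by (simp add: wf_graph_def)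
  define S where "S = {\<phi> \<in> homs K G. map \<phi> a = i \<and> map \<phi> b = j}"
  have fS: "finite S" unfolding S_def using homs_finite[OF fK fG] by simp
  have "card S = (\<Sum>\<phi>\<in>S. (1::nat))" by simp
  also have "\<dots> = (\<Sum>r\<in>RR K. \<Sum>\<phi>\<in>{\<phi> \<in> S. kr K \<phi> = r}. 1)"
    by (rule sum.group[symmetric]) (use fS finite_RR[OF fK] kr_RR[OF fK] in auto)
  also have "\<dots> = (\<Sum>r\<in>RR K. card {\<psi> \<in> homs (quot_graph r K) G. inj_on \<psi> (r ` V K) \<and> map \<psi> (map r a) = i \<and> map \<psi> (map r b) = j})"
  proof (rule sum.cong[OF refl])
    fix r assume r: "r \<in> RR K"
    have "{\<phi> \<in> S. kr K \<phi> = r} = {\<phi> \<in> homs K G. map \<phi> a = i \<and> map \<phi> b = j \<and> kr K \<phi> = r}"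
      unfolding S_def by auto
    then show "(\<Sum>\<phi>\<in>{\<phi> \<in> S. kr K \<phi> = r}. 1) = card {\<psi> \<in> homs (quot_graph r K) G. inj_on \<psi> (r ` V K) \<and> map \<psi> (map r a) = i \<and> map \<psi> (map r b) = j}"
      using fiber_bij[OF K G r a b, of i j] by simp
  qed
  finally have "card S = (\<Sum>r\<in>RR K. card {\<psi> \<in> homs (quot_graph r K) G. inj_on \<psi> (r ` V K) \<and> map \<psi> (map r a) = i \<and> map \<psi> (map r b) = j})" .
  then show ?thesis unfolding Tmat_def Imat_def S_def by (simp add: quot_graph_def)
qed

definition rid :: "graph \<Rightarrow> nat \<Rightarrow> nat" where "rid K = restrict (\<lambda>x. x) (V K)"

lemma rid_RR: "rid K \<in> RR K" by (simp add: RR_def rid_def)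

lemma quot_rid: "wf_graph K \<Longrightarrow> quot_graph (rid K) K = K"
proof -
  assume K: "wf_graph K"
  have "map_edges (rid K) (E K) = E K"
    unfolding map_edges_def rid_def using wf_edges[OF K] by force
  moreover have "rid K ` V K = V K" by (simp add: rid_def)
  ultimately show ?thesis by (simp add: quot_graph_def)
qed

lemma map_rid: "set a \<subseteq> V K \<Longrightarrow> map (rid K) a = a"
  by (induction a) (auto simp: rid_def)

lemma card_RR_lt:
  assumes r: "r \<in> RR K" and ne: "r \<noteq> rid K" and f: "finite (V K)"
  shows "card (r ` V K) < card (V K)"
proof -
  have sub: "r ` V K \<subseteq> V K" using r by (auto simp: RR_def)
  have le: "card (r ` V K) \<le> card (V K)" by (rule card_image_le[OF f])
  have "card (r ` V K) \<noteq> card (V K)"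
  proof
    assume eq: "card (r ` V K) = card (V K)"
    have inj: "inj_on r (V K)" by (rule eq_card_imp_inj_on[OF f eq])
    have "r = rid K"
    proof
      fix v show "r v = rid K v"
      proof (cases "v \<in> V K")
        case True
        then have "r (r v) = r v" "r v \<in> V K" using r by (auto simp: RR_def)
        then have "r v = v" using inj True by (auto dest: inj_onD)
        then show ?thesis using True by (simp add: rid_def)
      next
        case False then show ?thesis using r by (auto simp: RR_def rid_def extensional_def)
      qed
    qed
    then show False using ne by simp
  qed
  then show ?thesis using le by simp
qed

lemma quot_wf: "wf_graph K \<Longrightarrow> wf_graph (quot_graph r K)"
  unfolding wf_graph_def quot_graph_def map_edges_def by (auto; blast)

lemma easy_apply:
  assumes "easy_fibration F" "wf_graph K" "Fib F K \<noteq> {}" "x \<in> Fib F K"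
  shows "red (map q x) \<in> Fib F (quot_graph q K)"
  using assms unfolding easy_fibration_def by blast

lemma Ccat_quot:
  assumes gf: "graph_fibration F" and ez: "easy_fibration F" and C: "(K, a, b) \<in> Ccat F k l"
  shows "(quot_graph r K, map r a, map r b) \<in> Ccat F k l"
proof -
  have K: "wf_graph K" and x: "red (rev a @ b) \<in> Fib F K" and a: "set a \<subseteq> V K" and b: "set b \<subseteq> V K"
    and la: "length a = k" and lb: "length b = l"
    using C by (auto simp: Ccat_def Fib_def)
  have "red (map r (red (rev a @ b))) \<in> Fib F (quot_graph r K)"
    by (rule easy_apply[OF ez K _ x]) (use x in blast)
  then have "red (rev (map r a) @ map r b) \<in> Fib F (quot_graph r K)" by (simp add: rev_map)
  moreover have "wf_graph (quot_graph r K)" by (rule quot_wf[OF K])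
  moreover have "set (map r a) \<subseteq> V (quot_graph r K)" "set (map r b) \<subseteq> V (quot_graph r K)"
    using a b by (auto simp: quot_graph_def)
  ultimately show ?thesis using la lb by (simp add: Ccat_def Fib_def)
qed

lemma Imat_span:
  assumes gf: "graph_fibration F" and ez: "easy_fibration F" and G: "wf_graph G"
  shows "(K, a, b) \<in> Ccat F k l \<Longrightarrow> Imat G K a b \<in> cspan ((\<lambda>(K, a, b). Tmat G K a b) ` Ccat F k l)"
proof (induction "card (V K)" arbitrary: K a b rule: less_induct)
  case less
  let ?S = "(\<lambda>(K, a, b). Tmat G K a b) ` Ccat F k l"
  have K: "wf_graph K" and a: "set a \<subseteq> V K" and b: "set b \<subseteq> V K"
    using less.prems by (auto simp: Ccat_def)
  have fK: "finite (V K)" using K by (simp add: wf_graph_def)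
  have T: "Tmat G K a b \<in> cspan ?S" using less.prems by (intro cspan_base) force
  have R: "(\<lambda>j i. \<Sum>r\<in>RR K - {rid K}. Imat G (quot_graph r K) (map r a) (map r b) j i) \<in> cspan ?S"
  proof (rule cspan_sum)
    show "finite (RR K - {rid K})" using finite_RR[OF fK] by simp
    fix r assume r: "r \<in> RR K - {rid K}"
    have "card (V (quot_graph r K)) < card (V K)"
      using card_RR_lt[OF _ _ fK, of r] r by (simp add: quot_graph_def)
    then show "Imat G (quot_graph r K) (map r a) (map r b) \<in> cspan ?S"
      using less.hyps Ccat_quot[OF gf ez less.prems] by blast
  qed
  have eq: "Imat G K a b = (\<lambda>j i. Tmat G K a b j i - (\<Sum>r\<in>RR K - {rid K}. Imat G (quot_graph r K) (map r a) (map r b) j i))"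
  proof (intro ext)
    fix j i
    have "Tmat G K a b j i = (\<Sum>r\<in>RR K. Imat G (quot_graph r K) (map r a) (map r b) j i)"
      by (rule hom_decomp[OF K G a b])
    also have "\<dots> = Imat G (quot_graph (rid K) K) (map (rid K) a) (map (rid K) b) j i
        + (\<Sum>r\<in>RR K - {rid K}. Imat G (quot_graph r K) (map r a) (map r b) j i)"
      by (rule sum.remove[OF finite_RR[OF fK] rid_RR])
    also have "Imat G (quot_graph (rid K) K) (map (rid K) a) (map (rid K) b) j i = Imat G K a b j i"
      using quot_rid[OF K] map_rid[OF a] map_rid[OF b] by simp
    finally show "Imat G K a b j i = Tmat G K a b j i - (\<Sum>r\<in>RR K - {rid K}. Imat G (quot_graph r K) (map r a) (map r b) j i)"
      by simp
  qed
  show ?case unfolding eq by (rule cspan_diff[OF T R])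
qed




section \<open>Cosets\<close>

lemma gclass_imp:
  assumes N: "normal_sub A N" and eq: "gclass N i = gclass N j"
  shows "red (rev i @ j) \<in> N"
proof -
  have "[] \<in> N" using N by (simp add: normal_sub_def)
  then have "red j \<in> gclass N j" unfolding gclass_def by (metis append_Nil2 image_eqI)
  then obtain x where x: "x \<in> N" "red j = red (i @ x)" using eq unfolding gclass_def by auto
  have xr: "red x = x" using x(1) N by (auto simp: normal_sub_def fwords_def)
  have "red (rev i @ j) = red (rev i @ red j)" by simp
  also have "\<dots> = red (rev i @ red (i @ x))" using x by simp
  also have "\<dots> = red (rev i @ i @ x)" by (simp only: red_append_red2)
  also have "\<dots> = x" using xr by (simp add: red_rev_self)
  finally show ?thesis using x by simp
qed

lemma gclass_sub:
  assumes N: "normal_sub A N" and w: "red (rev i @ j) \<in> N"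
  shows "gclass N j \<subseteq> gclass N i"
proof
  fix z assume "z \<in> gclass N j"
  then obtain y where y: "y \<in> N" "z = red (j @ y)" unfolding gclass_def by auto
  have "\<forall>a\<in>N. \<forall>b\<in>N. red (a @ b) \<in> N" using N by (simp add: normal_sub_def)
  then have m: "red (red (rev i @ j) @ y) \<in> N" using w y(1) by blast
  have "z = red (i @ rev i @ j @ y)" using y by (simp add: red_self_rev)
  also have "\<dots> = red (i @ red ((rev i @ j) @ y))" by (simp only: red_append_red2 append_assoc)
  also have "\<dots> = red (i @ red (red (rev i @ j) @ y))" by simp
  finally show "z \<in> gclass N i" unfolding gclass_def using m by blast
qed

lemma gclass_eq:
  assumes N: "normal_sub A N" and w: "red (rev i @ j) \<in> N"
  shows "gclass N i = gclass N j"
proof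
  show "gclass N j \<subseteq> gclass N i" by (rule gclass_sub[OF N w])
  have "rev (red (rev i @ j)) \<in> N" using N w by (simp add: normal_sub_def)
  then have "red (rev j @ i) \<in> N" by (simp add: red_rev[symmetric])
  then show "gclass N i \<subseteq> gclass N j" by (rule gclass_sub[OF N])
qed

section \<open>Automorphisms\<close>

lemma AutG_perm: "\<sigma> \<in> AutG G n \<Longrightarrow> \<sigma> permutes {1..n}" by (simp add: AutG_def)

lemma AutG_id: "id \<in> AutG G n" by (simp add: AutG_def)

lemma AutG_inv:
  assumes s: "\<sigma> \<in> AutG G n" shows "inv \<sigma> \<in> AutG G n"
proof -
  have p: "\<sigma> permutes {1..n}" using s by (simp add: AutG_def)
  have e: "\<forall>x y. (x, y) \<in> E G \<longleftrightarrow> (\<sigma> x, \<sigma> y) \<in> E G" using s by (simp add: AutG_def)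
  have "(x, y) \<in> E G \<longleftrightarrow> (inv \<sigma> x, inv \<sigma> y) \<in> E G" for x y
    using e[rule_format, of "inv \<sigma> x" "inv \<sigma> y"] permutes_inverses(1)[OF p] by simp
  then show ?thesis using permutes_inv[OF p] by (simp add: AutG_def)
qed

lemma idx_map:
  assumes p: "\<sigma> permutes {1..n}"
  shows "map \<sigma> i \<in> idx n k \<longleftrightarrow> i \<in> idx n k"
proof -
  have "set (map \<sigma> i) \<subseteq> {1..n} \<longleftrightarrow> set i \<subseteq> {1..n}"
    using permutes_in_image[OF p] by auto
  then show ?thesis by (simp add: idx_def)
qed

lemma finite_idx: "finite (idx n k)"
  unfolding idx_def using finite_lists_length_eq[of "{1..n}" k] by (simp add: conj_commute)

lemma finite_AutG: "finite (AutG G n)"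
proof -
  have "AutG G n \<subseteq> {p. p permutes {1..n}}" by (auto simp: AutG_def)
  then show ?thesis using finite_permutations[of "{1..n}"] by (blast intro: finite_subset)
qed

lemma map_inv_eq:
  assumes p: "\<sigma> permutes S"
  shows "j = map \<sigma> q \<longleftrightarrow> q = map (inv \<sigma>) j"
proof
  assume "j = map \<sigma> q" then show "q = map (inv \<sigma>) j"
    by (simp add: map_idI permutes_inverses(2)[OF p])
next
  assume "q = map (inv \<sigma>) j" then show "j = map \<sigma> q"
    by (simp add: map_idI permutes_inverses(1)[OF p])
qed

section \<open>Intertwiner characterisation\<close>

lemma lhs_comp:
  assumes s: "\<sigma> \<in> H" and H: "\<And>\<sigma>. \<sigma> \<in> H \<Longrightarrow> \<sigma> permutes {1..n}" and i: "i \<in> idx n k"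
  shows "(\<Sum>m\<in>idx n k. T j m * ucoef N H m i \<sigma> c) = (if c = gclass N (map \<sigma> i) then T j (map \<sigma> i) else 0)"
proof -
  have "(\<Sum>m\<in>idx n k. T j m * ucoef N H m i \<sigma> c)
      = (\<Sum>m\<in>idx n k. if m = map \<sigma> i then (if c = gclass N m then T j m else 0) else 0)"
    by (rule sum.cong[OF refl]) (simp add: ucoef_def s)
  also have "\<dots> = (if c = gclass N (map \<sigma> i) then T j (map \<sigma> i) else 0)"
    using idx_map[OF H[OF s]] i finite_idx by simp
  finally show ?thesis .
qed

lemma rhs_comp:
  assumes s: "\<sigma> \<in> H" and H: "\<And>\<sigma>. \<sigma> \<in> H \<Longrightarrow> \<sigma> permutes {1..n}" and j: "j \<in> idx n l"
  shows "(\<Sum>p\<in>idx n l. ucoef N H j p \<sigma> c * T p i) = (if c = gclass N j then T (map (inv \<sigma>) j) i else 0)"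
proof -
  have p: "\<sigma> permutes {1..n}" using H s by blast
  have "(\<Sum>p\<in>idx n l. ucoef N H j p \<sigma> c * T p i)
      = (\<Sum>p\<in>idx n l. if p = map (inv \<sigma>) j then (if c = gclass N j then T p i else 0) else 0)"
    by (rule sum.cong[OF refl]) (simp add: ucoef_def s map_inv_eq[OF p])
  also have "\<dots> = (if c = gclass N j then T (map (inv \<sigma>) j) i else 0)"
    using idx_map[OF permutes_inv[OF p]] j finite_idx by simp
  finally show ?thesis .
qed

lemma none_comp:
  assumes s: "\<sigma> \<notin> H"
  shows "(\<Sum>m\<in>idx n k. T j m * ucoef N H m i \<sigma> c) = 0" "(\<Sum>p\<in>idx n l. ucoef N H j p \<sigma> c * T p i) = 0"
  using s by (simp_all add: ucoef_def)

definition good :: "nat list set \<Rightarrow> graph \<Rightarrow> nat \<Rightarrow> nat \<Rightarrow> nat \<Rightarrow> mat \<Rightarrow> bool" where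
  "good N G n k l T \<longleftrightarrow> (\<forall>j i. T j i \<noteq> 0 \<longrightarrow> j \<in> idx n l \<and> i \<in> idx n k)
     \<and> (\<forall>\<sigma>\<in>AutG G n. \<forall>j i. T (map \<sigma> j) (map \<sigma> i) = T j i)
     \<and> (\<forall>j i. T j i \<noteq> 0 \<longrightarrow> gclass N i = gclass N j)"

lemma intertw_good: "T \<in> intertw N (AutG G n) n k l \<Longrightarrow> good N G n k l T"
proof -
  assume T: "T \<in> intertw N (AutG G n) n k l"
  let ?H = "AutG G n"
  have Hp: "\<And>\<sigma>. \<sigma> \<in> AutG G n \<Longrightarrow> \<sigma> permutes {1..n}" by (rule AutG_perm)
  have supp: "\<forall>j i. T j i \<noteq> 0 \<longrightarrow> j \<in> idx n l \<and> i \<in> idx n k" using T by (simp add: intertw_def)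
  have eqn: "(if c = gclass N (map \<sigma> i) then T j (map \<sigma> i) else 0) = (if c = gclass N j then T (map (inv \<sigma>) j) i else 0)"
    if s: "\<sigma> \<in> ?H" and j: "j \<in> idx n l" and i: "i \<in> idx n k" for \<sigma> j i c
  proof -
    have "(\<lambda>\<sigma> c. \<Sum>m\<in>idx n k. T j m * ucoef N ?H m i \<sigma> c) = (\<lambda>\<sigma> c. \<Sum>p\<in>idx n l. ucoef N ?H j p \<sigma> c * T p i)"
      using T j i by (simp add: intertw_def)
    then have eq: "(\<Sum>m\<in>idx n k. T j m * ucoef N ?H m i \<sigma> c) = (\<Sum>p\<in>idx n l. ucoef N ?H j p \<sigma> c * T p i)"
      by (rule fun_cong[OF fun_cong, of _ _ \<sigma> c, simplified])
    have "(if c = gclass N (map \<sigma> i) then T j (map \<sigma> i) else 0) = (\<Sum>m\<in>idx n k. T j m * ucoef N ?H m i \<sigma> c)"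
      by (rule lhs_comp[OF s Hp i, symmetric])
    also have "\<dots> = (\<Sum>p\<in>idx n l. ucoef N ?H j p \<sigma> c * T p i)" by (rule eq)
    also have "\<dots> = (if c = gclass N j then T (map (inv \<sigma>) j) i else 0)"
      by (rule rhs_comp[OF s Hp j])
    finally show ?thesis .
  qed
  have key: "T j (map \<sigma> i) = T (map (inv \<sigma>) j) i \<and> (T j (map \<sigma> i) \<noteq> 0 \<longrightarrow> gclass N (map \<sigma> i) = gclass N j)"
    if s: "\<sigma> \<in> ?H" and j: "j \<in> idx n l" and i: "i \<in> idx n k" for \<sigma> j i
    using eqn[OF s j i, of "gclass N (map \<sigma> i)"] eqn[OF s j i, of "gclass N j"]
    by (cases "gclass N (map \<sigma> i) = gclass N j") simp_all
  have inv: "\<forall>\<sigma>\<in>?H. \<forall>j i. T (map \<sigma> j) (map \<sigma> i) = T j i"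
  proof (intro ballI allI)
    fix \<sigma> j i assume s: "\<sigma> \<in> ?H"
    have p: "\<sigma> permutes {1..n}" using s by (rule AutG_perm)
    show "T (map \<sigma> j) (map \<sigma> i) = T j i"
    proof (cases "j \<in> idx n l \<and> i \<in> idx n k")
      case True
      have "map \<sigma> j \<in> idx n l" using True idx_map[OF p] by simp
      then have "T (map \<sigma> j) (map \<sigma> i) = T (map (inv \<sigma>) (map \<sigma> j)) i" using key[OF s _ ] True by blast
      also have "map (inv \<sigma>) (map \<sigma> j) = j" by (simp add: map_idI permutes_inverses(2)[OF p])
      finally show ?thesis .
    next
      case False
      then have "\<not> (map \<sigma> j \<in> idx n l \<and> map \<sigma> i \<in> idx n k)" using idx_map[OF p] by simp
      then show ?thesis using supp False by metis
    qed
  qed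
  have cos: "\<forall>j i. T j i \<noteq> 0 \<longrightarrow> gclass N i = gclass N j"
  proof (intro allI impI)
    fix j i assume nz: "T j i \<noteq> 0"
    then have ji: "j \<in> idx n l" "i \<in> idx n k" using supp by auto
    show "gclass N i = gclass N j" using key[OF AutG_id ji] nz by simp
  qed
  show ?thesis unfolding good_def using supp inv cos by blast
qed

lemma good_intertw: "good N G n k l T \<Longrightarrow> T \<in> intertw N (AutG G n) n k l"
proof -
  assume g: "good N G n k l T"
  let ?H = "AutG G n"
  have Hp: "\<And>\<sigma>. \<sigma> \<in> AutG G n \<Longrightarrow> \<sigma> permutes {1..n}" by (rule AutG_perm)
  have supp: "\<forall>j i. T j i \<noteq> 0 \<longrightarrow> j \<in> idx n l \<and> i \<in> idx n k"
    and inv: "\<forall>\<sigma>\<in>?H. \<forall>j i. T (map \<sigma> j) (map \<sigma> i) = T j i"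
    and cos: "\<forall>j i. T j i \<noteq> 0 \<longrightarrow> gclass N i = gclass N j" using g by (auto simp: good_def)
  have "(\<lambda>\<sigma> c. \<Sum>m\<in>idx n k. T j m * ucoef N ?H m i \<sigma> c) = (\<lambda>\<sigma> c. \<Sum>p\<in>idx n l. ucoef N ?H j p \<sigma> c * T p i)"
    if j: "j \<in> idx n l" and i: "i \<in> idx n k" for j i
  proof (intro ext)
    fix \<sigma> c
    show "(\<Sum>m\<in>idx n k. T j m * ucoef N ?H m i \<sigma> c) = (\<Sum>p\<in>idx n l. ucoef N ?H j p \<sigma> c * T p i)"
    proof (cases "\<sigma> \<in> ?H")
      case True
      have p: "\<sigma> permutes {1..n}" using True by (rule AutG_perm)
      have tt: "T j (map \<sigma> i) = T (map (inv \<sigma>) j) i"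
      proof -
        have "T (map \<sigma> (map (inv \<sigma>) j)) (map \<sigma> i) = T (map (inv \<sigma>) j) i" using inv True by blast
        moreover have "map \<sigma> (map (inv \<sigma>) j) = j" by (simp add: map_idI permutes_inverses(1)[OF p])
        ultimately show ?thesis by simp
      qed
      have "(if c = gclass N (map \<sigma> i) then T j (map \<sigma> i) else 0) = (if c = gclass N j then T (map (inv \<sigma>) j) i else 0)"
      proof -
        have cc: "T j (map \<sigma> i) \<noteq> 0 \<Longrightarrow> gclass N (map \<sigma> i) = gclass N j" using cos by blast
        show ?thesis using tt cc by (cases "T j (map \<sigma> i) = 0") simp_all
      qed
      note eq = this
      have "(\<Sum>m\<in>idx n k. T j m * ucoef N ?H m i \<sigma> c) = (if c = gclass N (map \<sigma> i) then T j (map \<sigma> i) else 0)"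
        by (rule lhs_comp[OF True Hp i])
      also have "\<dots> = (if c = gclass N j then T (map (inv \<sigma>) j) i else 0)" by (rule eq)
      also have "\<dots> = (\<Sum>p\<in>idx n l. ucoef N ?H j p \<sigma> c * T p i)"
        by (rule rhs_comp[OF True Hp j, symmetric])
      finally show ?thesis .
    next
      case False then show ?thesis using none_comp[OF False] by simp
    qed
  qed
  then show ?thesis using supp unfolding intertw_def by blast
qed




lemma comp_hom:
  assumes s: "\<sigma> \<in> AutG G n" and VG: "V G = {1..n}" and K: "wf_graph K" and h: "\<phi> \<in> homs K G"
  shows "restrict (\<sigma> \<circ> \<phi>) (V K) \<in> homs K G"
  unfolding homs_def
proof (intro CollectI conjI ballI allI impI)
  have p: "\<sigma> permutes {1..n}" using s by (rule AutG_perm)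
  have e: "\<forall>x y. (x, y) \<in> E G \<longleftrightarrow> (\<sigma> x, \<sigma> y) \<in> E G" using s by (simp add: AutG_def)
  show "restrict (\<sigma> \<circ> \<phi>) (V K) \<in> extensional (V K)" by simp
  fix x assume "x \<in> V K"
  then show "restrict (\<sigma> \<circ> \<phi>) (V K) x \<in> V G"
    using h permutes_in_image[OF p] VG by (auto simp: homs_def)
next
  fix x y assume xy: "(x, y) \<in> E K"
  have e: "\<forall>x y. (x, y) \<in> E G \<longleftrightarrow> (\<sigma> x, \<sigma> y) \<in> E G" using s by (simp add: AutG_def)
  have "(\<phi> x, \<phi> y) \<in> E G" using h xy by (auto simp: homs_def)
  then show "(restrict (\<sigma> \<circ> \<phi>) (V K) x, restrict (\<sigma> \<circ> \<phi>) (V K) y) \<in> E G"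
    using wf_edges[OF K xy] e by simp
qed

lemma Tmat_le:
  assumes s: "\<sigma> \<in> AutG G n" and VG: "V G = {1..n}" and K: "wf_graph K" and G: "wf_graph G"
    and a: "set a \<subseteq> V K" and b: "set b \<subseteq> V K"
  shows "card {\<phi> \<in> homs K G. map \<phi> a = i \<and> map \<phi> b = j}
      \<le> card {\<phi> \<in> homs K G. map \<phi> a = map \<sigma> i \<and> map \<phi> b = map \<sigma> j}"
proof (rule card_inj_on_le[where f="\<lambda>\<phi>. restrict (\<sigma> \<circ> \<phi>) (V K)"])
  have p: "\<sigma> permutes {1..n}" using s by (rule AutG_perm)
  have fK: "finite (V K)" using K by (simp add: wf_graph_def)
  have fG: "finite (V G)" using G by (simp add: wf_graph_def)
  show "finite {\<phi> \<in> homs K G. map \<phi> a = map \<sigma> i \<and> map \<phi> b = map \<sigma> j}"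
    using homs_finite[OF fK fG] by simp
  show "inj_on (\<lambda>\<phi>. restrict (\<sigma> \<circ> \<phi>) (V K)) {\<phi> \<in> homs K G. map \<phi> a = i \<and> map \<phi> b = j}"
  proof (rule inj_onI)
    fix \<phi> \<psi> assume h: "\<phi> \<in> {\<phi> \<in> homs K G. map \<phi> a = i \<and> map \<phi> b = j}"
      "\<psi> \<in> {\<phi> \<in> homs K G. map \<phi> a = i \<and> map \<phi> b = j}"
      and eq: "restrict (\<sigma> \<circ> \<phi>) (V K) = restrict (\<sigma> \<circ> \<psi>) (V K)"
    show "\<phi> = \<psi>"
    proof (rule extensionalityI[of _ "V K"])
      show "\<phi> \<in> extensional (V K)" "\<psi> \<in> extensional (V K)" using h by (auto simp: homs_def)
      fix x assume x: "x \<in> V K"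
      have "\<sigma> (\<phi> x) = \<sigma> (\<psi> x)" using fun_cong[OF eq, of x] x by simp
      then show "\<phi> x = \<psi> x" using permutes_inj[OF p] by (simp add: inj_eq)
    qed
  qed
  show "(\<lambda>\<phi>. restrict (\<sigma> \<circ> \<phi>) (V K)) ` {\<phi> \<in> homs K G. map \<phi> a = i \<and> map \<phi> b = j}
      \<subseteq> {\<phi> \<in> homs K G. map \<phi> a = map \<sigma> i \<and> map \<phi> b = map \<sigma> j}"
  proof (rule subsetI)
    fix y assume "y \<in> (\<lambda>\<phi>. restrict (\<sigma> \<circ> \<phi>) (V K)) ` {\<phi> \<in> homs K G. map \<phi> a = i \<and> map \<phi> b = j}"
    then obtain \<phi> where y: "y = restrict (\<sigma> \<circ> \<phi>) (V K)" and h: "\<phi> \<in> homs K G" "map \<phi> a = i" "map \<phi> b = j"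
      by blast
    have "map y a = map \<sigma> i" unfolding y h(2)[symmetric] map_map
      by (rule map_cong[OF refl]) (use a in auto)
    moreover have "map y b = map \<sigma> j" unfolding y h(3)[symmetric] map_map
      by (rule map_cong[OF refl]) (use b in auto)
    moreover have "y \<in> homs K G" unfolding y by (rule comp_hom[OF s VG K h(1)])
    ultimately show "y \<in> {\<phi> \<in> homs K G. map \<phi> a = map \<sigma> i \<and> map \<phi> b = map \<sigma> j}" by blast
  qed
qed

lemma Tmat_inv:
  assumes s: "\<sigma> \<in> AutG G n" and VG: "V G = {1..n}" and K: "wf_graph K" and G: "wf_graph G"
    and a: "set a \<subseteq> V K" and b: "set b \<subseteq> V K"
  shows "Tmat G K a b (map \<sigma> j) (map \<sigma> i) = Tmat G K a b j i"
proof -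
  have p: "\<sigma> permutes {1..n}" using s by (rule AutG_perm)
  have 1: "card {\<phi> \<in> homs K G. map \<phi> a = i \<and> map \<phi> b = j}
      \<le> card {\<phi> \<in> homs K G. map \<phi> a = map \<sigma> i \<and> map \<phi> b = map \<sigma> j}"
    by (rule Tmat_le[OF s VG K G a b])
  have 2: "card {\<phi> \<in> homs K G. map \<phi> a = map \<sigma> i \<and> map \<phi> b = map \<sigma> j}
      \<le> card {\<phi> \<in> homs K G. map \<phi> a = map (inv \<sigma>) (map \<sigma> i) \<and> map \<phi> b = map (inv \<sigma>) (map \<sigma> j)}"
    by (rule Tmat_le[OF AutG_inv[OF s] VG K G a b])
  have "map (inv \<sigma>) (map \<sigma> i) = i" "map (inv \<sigma>) (map \<sigma> j) = j"
    by (simp_all add: map_idI permutes_inverses(2)[OF p])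
  then show ?thesis using 1 2 unfolding Tmat_def by simp
qed

lemma Tmat_coset:
  assumes gf: "graph_fibration F" and ez: "easy_fibration F" and G: "wf_graph G"
    and ne: "Fib F G \<noteq> {}" and C: "(K, a, b) \<in> Ccat F k l" and h: "\<phi> \<in> homs K G"
  shows "red (rev (map \<phi> a) @ map \<phi> b) \<in> Fib F G"
proof -
  have K: "wf_graph K" and x: "red (rev a @ b) \<in> Fib F K"
    using C by (auto simp: Ccat_def Fib_def)
  have "[] \<in> Fib F G" using fib_normal[OF gf G ne] by (simp add: normal_sub_def)
  then have GN: "(G, []) \<in> F" by (simp add: Fib_def)
  have "red (map \<phi> (red (rev a @ b))) \<in> Fib F (quot_graph \<phi> K)"
    by (rule easy_apply[OF ez K _ x]) (use x in blast)
  then have Q: "(quot_graph \<phi> K, red (rev (map \<phi> a) @ map \<phi> b)) \<in> F" by (simp add: Fib_def rev_map)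
  have VQ: "V (quot_graph \<phi> K) \<subseteq> V G" using h by (auto simp: quot_graph_def homs_def)
  have EQ: "E (quot_graph \<phi> K) \<subseteq> E G" using h by (auto simp: quot_graph_def homs_def map_edges_def)
  have "(G, red (rev (map \<phi> a) @ map \<phi> b)) \<in> F" by (rule glue_sub[OF gf G GN Q VQ EQ])
  then show ?thesis by (simp add: Fib_def)
qed

lemma Tmat_good:
  assumes gf: "graph_fibration F" and ez: "easy_fibration F" and G: "wf_graph G" and VG: "V G = {1..n}"
    and ne: "Fib F G \<noteq> {}" and C: "(K, a, b) \<in> Ccat F k l"
  shows "good (Fib F G) G n k l (Tmat G K a b)"
proof -
  have K: "wf_graph K" and a: "set a \<subseteq> V K" and b: "set b \<subseteq> V K" and la: "length a = k" and lb: "length b = l"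
    using C by (auto simp: Ccat_def)
  have ex: "\<exists>\<phi>. \<phi> \<in> homs K G \<and> map \<phi> a = i \<and> map \<phi> b = j" if "Tmat G K a b j i \<noteq> 0" for j i
  proof (rule ccontr)
    assume na: "\<not> ?thesis"
    have "card {\<phi> \<in> homs K G. map \<phi> a = i \<and> map \<phi> b = j} \<noteq> 0" using that by (simp add: Tmat_def)
    then have "{\<phi> \<in> homs K G. map \<phi> a = i \<and> map \<phi> b = j} \<noteq> {}" by (metis card.empty)
    then show False using na by blast
  qed
  have 1: "j \<in> idx n l \<and> i \<in> idx n k \<and> gclass (Fib F G) i = gclass (Fib F G) j"
    if nz: "Tmat G K a b j i \<noteq> 0" for j i
  proof -
    obtain \<phi> where h: "\<phi> \<in> homs K G" "map \<phi> a = i" "map \<phi> b = j" using ex[OF nz] by blast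
    have vals: "set (map \<phi> c) \<subseteq> V G" if "set c \<subseteq> V K" for c using h(1) that by (auto simp: homs_def)
    have "j \<in> idx n l \<and> i \<in> idx n k" using vals[OF a] vals[OF b] h la lb VG by (auto simp: idx_def)
    moreover have "gclass (Fib F G) i = gclass (Fib F G) j"
      using gclass_eq[OF fib_normal[OF gf G ne] Tmat_coset[OF gf ez G ne C h(1)]] h by simp
    ultimately show ?thesis by blast
  qed
  have 2: "Tmat G K a b (map \<sigma> j) (map \<sigma> i) = Tmat G K a b j i" if s: "\<sigma> \<in> AutG G n" for \<sigma> j i
    by (rule Tmat_inv[OF s VG K G a b])
  show ?thesis unfolding good_def using 1 2 by blast
qed

lemma good_sum:
  assumes "finite X" "\<And>M. M \<in> X \<Longrightarrow> good N G n k l M"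
  shows "good N G n k l (\<lambda>j i. \<Sum>M\<in>X. c M * M j i)"
proof -
  have 1: "j \<in> idx n l \<and> i \<in> idx n k \<and> gclass N i = gclass N j"
    if nz: "(\<Sum>M\<in>X. c M * M j i) \<noteq> 0" for j i
  proof -
    obtain M where M: "M \<in> X" "c M * M j i \<noteq> 0" using nz by (rule sum.not_neutral_contains_not_neutral)
    then have "M j i \<noteq> 0" by simp
    then show ?thesis using assms(2)[OF M(1)] unfolding good_def by blast
  qed
  have 2: "(\<Sum>M\<in>X. c M * M (map \<sigma> j) (map \<sigma> i)) = (\<Sum>M\<in>X. c M * M j i)"
    if s: "\<sigma> \<in> AutG G n" for \<sigma> j i
  proof (rule sum.cong[OF refl])
    fix M assume "M \<in> X"
    then have "M (map \<sigma> j) (map \<sigma> i) = M j i" using assms(2) s unfolding good_def by blast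
    then show "c M * M (map \<sigma> j) (map \<sigma> i) = c M * M j i" by simp
  qed
  show ?thesis unfolding good_def using 1 2 by blast
qed

lemma cspan_sub:
  assumes gf: "graph_fibration F" and ez: "easy_fibration F" and G: "wf_graph G" and VG: "V G = {1..n}"
    and ne: "Fib F G \<noteq> {}"
  shows "cspan ((\<lambda>(K, a, b). Tmat G K a b) ` Ccat F k l) \<subseteq> intertw (Fib F G) (AutG G n) n k l"
proof
  fix T assume "T \<in> cspan ((\<lambda>(K, a, b). Tmat G K a b) ` Ccat F k l)"
  then obtain X c where X: "finite X" "X \<subseteq> (\<lambda>(K, a, b). Tmat G K a b) ` Ccat F k l"
    "T = (\<lambda>j i. \<Sum>M\<in>X. c M * M j i)" unfolding cspan_def by blast
  have "good (Fib F G) G n k l M" if "M \<in> X" for M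
  proof -
    obtain K a b where "(K, a, b) \<in> Ccat F k l" "M = Tmat G K a b" using X(2) \<open>M \<in> X\<close> by auto
    then show ?thesis using Tmat_good[OF gf ez G VG ne] by blast
  qed
  then have "good (Fib F G) G n k l T" unfolding X(3) by (intro good_sum[OF X(1)])
  then show "T \<in> intertw (Fib F G) (AutG G n) n k l" by (rule good_intertw)
qed




lemma inj_hom_Aut:
  assumes G: "wf_graph G" and VG: "V G = {1..n}" and h: "\<phi> \<in> homs G G" and inj: "inj_on \<phi> (V G)"
  shows "(\<lambda>x. if x \<in> V G then \<phi> x else x) \<in> AutG G n"
proof -
  define \<sigma> where "\<sigma> = (\<lambda>x. if x \<in> V G then \<phi> x else x)"
  have fG: "finite (V G)" using G by (simp add: wf_graph_def)
  have img: "\<sigma> ` V G \<subseteq> V G" using h by (auto simp: \<sigma>_def homs_def)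
  have injs: "inj_on \<sigma> (V G)" using inj by (auto simp: \<sigma>_def inj_on_def)
  have "\<sigma> ` V G = V G" by (rule endo_inj_surj[OF fG img injs])
  then have bij: "bij_betw \<sigma> (V G) (V G)" using injs by (simp add: bij_betw_def)
  have p: "\<sigma> permutes V G" by (rule bij_imp_permutes[OF bij]) (simp add: \<sigma>_def)
  have injU: "inj \<sigma>" by (rule permutes_inj[OF p])
  have fwd: "(\<sigma> x, \<sigma> y) \<in> E G" if "(x, y) \<in> E G" for x y
  proof -
    have "x \<in> V G" "y \<in> V G" using wf_edges[OF G that] by auto
    moreover have "(\<phi> x, \<phi> y) \<in> E G" using h that unfolding homs_def by blast
    ultimately show ?thesis by (simp add: \<sigma>_def)
  qed
  define f where "f = (\<lambda>(x, y). (\<sigma> x, \<sigma> y))"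
  have "E G \<subseteq> V G \<times> V G" using G by (simp add: wf_graph_def)
  then have fE: "finite (E G)" by (rule finite_subset) (simp add: fG)
  have fimg: "f ` E G \<subseteq> E G"
  proof (rule image_subsetI)
    fix p assume "p \<in> E G" then show "f p \<in> E G" by (cases p) (simp add: f_def fwd)
  qed
  have finj: "inj_on f (E G)"
  proof (rule inj_onI)
    fix p q assume "f p = f q"
    then show "p = q" using injU unfolding f_def by (cases p, cases q) (simp add: inj_eq)
  qed
  have fsurj: "f ` E G = E G" by (rule endo_inj_surj[OF fE fimg finj])
  have bwd: "(x, y) \<in> E G" if "(\<sigma> x, \<sigma> y) \<in> E G" for x y
  proof -
    have "(\<sigma> x, \<sigma> y) \<in> f ` E G" using that fsurj by simp
    then obtain p where pE: "p \<in> E G" and fp: "f p = (\<sigma> x, \<sigma> y)" by (elim imageE) simp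
    obtain x' y' where pe: "p = (x', y')" by (cases p)
    have "\<sigma> x' = \<sigma> x" "\<sigma> y' = \<sigma> y" using fp unfolding pe f_def by simp_all
    then have "x' = x" "y' = y" using injU by (simp_all add: inj_eq)
    then show ?thesis using pE pe by simp
  qed
  have p': "\<sigma> permutes {1..n}" using p VG by simp
  have "\<forall>x y. (x, y) \<in> E G \<longleftrightarrow> (\<sigma> x, \<sigma> y) \<in> E G" using fwd bwd by blast
  then have "\<sigma> \<in> AutG G n" unfolding AutG_def using p' by blast
  then show ?thesis by (simp add: \<sigma>_def)
qed

lemma Imat_Aut:
  assumes G: "wf_graph G" and VG: "V G = {1..n}" and i0: "set i0 \<subseteq> V G" and j0: "set j0 \<subseteq> V G"
  shows "Imat G G i0 j0 j i = of_nat (card {\<sigma> \<in> AutG G n. map \<sigma> i0 = i \<and> map \<sigma> j0 = j})"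
proof -
  have "card {\<sigma> \<in> AutG G n. map \<sigma> i0 = i \<and> map \<sigma> j0 = j}
      = card {\<phi> \<in> homs G G. inj_on \<phi> (V G) \<and> map \<phi> i0 = i \<and> map \<phi> j0 = j}"
  proof (rule bij_betw_same_card[of "\<lambda>\<sigma>. restrict \<sigma> (V G)"],
         rule bij_betw_byWitness[where f'="\<lambda>\<phi> x. if x \<in> V G then \<phi> x else x"])
    show "\<forall>\<sigma>\<in>{\<sigma> \<in> AutG G n. map \<sigma> i0 = i \<and> map \<sigma> j0 = j}.
        (\<lambda>x. if x \<in> V G then restrict \<sigma> (V G) x else x) = \<sigma>"
    proof (intro ballI ext)
      fix \<sigma> x assume "\<sigma> \<in> {\<sigma> \<in> AutG G n. map \<sigma> i0 = i \<and> map \<sigma> j0 = j}"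
      then have "\<sigma> \<in> AutG G n" by blast
      then have p: "\<sigma> permutes V G" using AutG_perm VG by metis
      show "(if x \<in> V G then restrict \<sigma> (V G) x else x) = \<sigma> x"
        using permutes_not_in[OF p] by auto
    qed
    show "\<forall>\<phi>\<in>{\<phi> \<in> homs G G. inj_on \<phi> (V G) \<and> map \<phi> i0 = i \<and> map \<phi> j0 = j}.
        restrict (\<lambda>x. if x \<in> V G then \<phi> x else x) (V G) = \<phi>"
    proof (intro ballI)
      fix \<phi> assume "\<phi> \<in> {\<phi> \<in> homs G G. inj_on \<phi> (V G) \<and> map \<phi> i0 = i \<and> map \<phi> j0 = j}"
      then have "\<phi> \<in> extensional (V G)" by (simp add: homs_def)
      then show "restrict (\<lambda>x. if x \<in> V G then \<phi> x else x) (V G) = \<phi>"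
        by (intro extensionalityI[of _ "V G"]) auto
    qed
    show "(\<lambda>\<sigma>. restrict \<sigma> (V G)) ` {\<sigma> \<in> AutG G n. map \<sigma> i0 = i \<and> map \<sigma> j0 = j}
        \<subseteq> {\<phi> \<in> homs G G. inj_on \<phi> (V G) \<and> map \<phi> i0 = i \<and> map \<phi> j0 = j}"
    proof (rule subsetI)
      fix y assume "y \<in> (\<lambda>\<sigma>. restrict \<sigma> (V G)) ` {\<sigma> \<in> AutG G n. map \<sigma> i0 = i \<and> map \<sigma> j0 = j}"
      then obtain \<sigma> where y: "y = restrict \<sigma> (V G)" and s: "\<sigma> \<in> AutG G n" "map \<sigma> i0 = i" "map \<sigma> j0 = j"
        by blast
      have p: "\<sigma> permutes V G" using AutG_perm[OF s(1)] VG by simp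
      have e: "\<forall>x y. (x, y) \<in> E G \<longleftrightarrow> (\<sigma> x, \<sigma> y) \<in> E G" using s unfolding AutG_def by blast
      have hom: "y \<in> homs G G"
        unfolding homs_def y
      proof (intro CollectI conjI ballI allI impI)
        show "restrict \<sigma> (V G) \<in> extensional (V G)" by simp
        fix x assume "x \<in> V G" then show "restrict \<sigma> (V G) x \<in> V G" using permutes_in_image[OF p] by simp
      next
        fix x z assume xz: "(x, z) \<in> E G"
        have "(\<sigma> x, \<sigma> z) \<in> E G" using e xz by blast
        then show "(restrict \<sigma> (V G) x, restrict \<sigma> (V G) z) \<in> E G" using wf_edges[OF G xz] by simp
      qed
      have injs: "inj \<sigma>" by (rule permutes_inj[OF p])
      have inj: "inj_on y (V G)" unfolding y
        by (rule inj_onI) (use injs in \<open>simp add: inj_eq\<close>)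
      have mi: "map y i0 = i" unfolding y s(2)[symmetric] by (rule map_cong[OF refl]) (use i0 in auto)
      have mj: "map y j0 = j" unfolding y s(3)[symmetric] by (rule map_cong[OF refl]) (use j0 in auto)
      show "y \<in> {\<phi> \<in> homs G G. inj_on \<phi> (V G) \<and> map \<phi> i0 = i \<and> map \<phi> j0 = j}" using hom inj mi mj by blast
    qed
    show "(\<lambda>\<phi> x. if x \<in> V G then \<phi> x else x) ` {\<phi> \<in> homs G G. inj_on \<phi> (V G) \<and> map \<phi> i0 = i \<and> map \<phi> j0 = j}
        \<subseteq> {\<sigma> \<in> AutG G n. map \<sigma> i0 = i \<and> map \<sigma> j0 = j}"
    proof (rule subsetI)
      fix y assume "y \<in> (\<lambda>\<phi> x. if x \<in> V G then \<phi> x else x) ` {\<phi> \<in> homs G G. inj_on \<phi> (V G) \<and> map \<phi> i0 = i \<and> map \<phi> j0 = j}"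
      then obtain \<phi> where y: "y = (\<lambda>x. if x \<in> V G then \<phi> x else x)" and h: "\<phi> \<in> homs G G" "inj_on \<phi> (V G)"
        "map \<phi> i0 = i" "map \<phi> j0 = j" by blast
      have A: "y \<in> AutG G n" unfolding y by (rule inj_hom_Aut[OF G VG h(1,2)])
      have mi: "map y i0 = i" unfolding y h(3)[symmetric] by (rule map_cong[OF refl]) (use i0 in auto)
      have mj: "map y j0 = j" unfolding y h(4)[symmetric] by (rule map_cong[OF refl]) (use j0 in auto)
      show "y \<in> {\<sigma> \<in> AutG G n. map \<sigma> i0 = i \<and> map \<sigma> j0 = j}" using A mi mj by blast
    qed
  qed
  then show ?thesis unfolding Imat_def by simp
qed




lemma card_filter_sum:
  assumes "finite A"
  shows "(of_nat (card {x \<in> A. P x}) :: complex) = (\<Sum>x\<in>A. if P x then 1 else 0)"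
proof -
  have "(of_nat (card {x \<in> A. P x}) :: complex) = (\<Sum>x\<in>{x \<in> A. P x}. 1)" by simp
  also have "\<dots> = (\<Sum>x\<in>A. if P x then 1 else 0)" by (rule sum.inter_filter[OF assms])
  finally show ?thesis .
qed

lemma intertw_sub:
  assumes gf: "graph_fibration F" and ez: "easy_fibration F" and G: "wf_graph G" and VG: "V G = {1..n}"
    and ne: "Fib F G \<noteq> {}"
  shows "intertw (Fib F G) (AutG G n) n k l \<subseteq> cspan ((\<lambda>(K, a, b). Tmat G K a b) ` Ccat F k l)"
proof
  fix T assume T: "T \<in> intertw (Fib F G) (AutG G n) n k l"
  let ?N = "Fib F G"
  let ?S = "(\<lambda>(K, a, b). Tmat G K a b) ` Ccat F k l"
  have g: "good ?N G n k l T" by (rule intertw_good[OF T])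
  have supp: "\<And>j i. T j i \<noteq> 0 \<Longrightarrow> j \<in> idx n l \<and> i \<in> idx n k"
    and inv: "\<And>\<sigma> j i. \<sigma> \<in> AutG G n \<Longrightarrow> T (map \<sigma> j) (map \<sigma> i) = T j i"
    and cos: "\<And>j i. T j i \<noteq> 0 \<Longrightarrow> gclass ?N i = gclass ?N j"
    using g unfolding good_def by blast+
  have Nn: "normal_sub (V G) ?N" by (rule fib_normal[OF gf G ne])
  define X where "X = {p \<in> idx n l \<times> idx n k. T (fst p) (snd p) \<noteq> 0}"
  have fX: "finite X" unfolding X_def using finite_idx by simp
  define A where "A = card (AutG G n)"
  have fA: "finite (AutG G n)" by (rule finite_AutG)
  have A0: "A > 0" unfolding A_def using fA AutG_id[of G n] by (auto simp: card_gt_0_iff)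
  have Cp: "(G, snd p, fst p) \<in> Ccat F k l" if p: "p \<in> X" for p
  proof -
    have nz: "T (fst p) (snd p) \<noteq> 0" and ix: "fst p \<in> idx n l" "snd p \<in> idx n k" using p by (auto simp: X_def)
    have "red (rev (snd p) @ fst p) \<in> ?N" by (rule gclass_imp[OF Nn cos[OF nz]])
    then show ?thesis using G ix VG by (auto simp: Ccat_def Fib_def idx_def)
  qed
  have claim: "T j i = (\<Sum>p\<in>X. (T (fst p) (snd p) / of_nat A) * Imat G G (snd p) (fst p) j i)" for j i
  proof -
    let ?P = "\<lambda>p \<sigma>. map \<sigma> (snd p) = i \<and> map \<sigma> (fst p) = j"
    have "(\<Sum>p\<in>X. (T (fst p) (snd p) / of_nat A) * Imat G G (snd p) (fst p) j i)
        = (\<Sum>p\<in>X. \<Sum>\<sigma>\<in>AutG G n. if ?P p \<sigma> then T (fst p) (snd p) / of_nat A else 0)"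
    proof (rule sum.cong[OF refl])
      fix p assume p: "p \<in> X"
      have ix: "set (snd p) \<subseteq> V G" "set (fst p) \<subseteq> V G" using p VG by (auto simp: X_def idx_def)
      have "Imat G G (snd p) (fst p) j i = (\<Sum>\<sigma>\<in>AutG G n. if ?P p \<sigma> then 1 else 0)"
        unfolding Imat_Aut[OF G VG ix] by (rule card_filter_sum[OF fA])
      then have "(T (fst p) (snd p) / of_nat A) * Imat G G (snd p) (fst p) j i
          = (\<Sum>\<sigma>\<in>AutG G n. (T (fst p) (snd p) / of_nat A) * (if ?P p \<sigma> then 1 else 0))"
        by (simp only: sum_distrib_left)
      also have "\<dots> = (\<Sum>\<sigma>\<in>AutG G n. if ?P p \<sigma> then T (fst p) (snd p) / of_nat A else 0)"
        by (rule sum.cong[OF refl]) simp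
      finally show "(T (fst p) (snd p) / of_nat A) * Imat G G (snd p) (fst p) j i
          = (\<Sum>\<sigma>\<in>AutG G n. if ?P p \<sigma> then T (fst p) (snd p) / of_nat A else 0)" .
    qed
    also have "\<dots> = (\<Sum>\<sigma>\<in>AutG G n. \<Sum>p\<in>X. if ?P p \<sigma> then T (fst p) (snd p) / of_nat A else 0)"
      by (rule sum.swap)
    also have "\<dots> = (\<Sum>\<sigma>\<in>AutG G n. T j i / of_nat A)"
    proof (rule sum.cong[OF refl])
      fix \<sigma> assume s: "\<sigma> \<in> AutG G n"
      have p: "\<sigma> permutes {1..n}" by (rule AutG_perm[OF s])
      define q where "q = (map (inv \<sigma>) j, map (inv \<sigma>) i)"
      have e1: "map \<sigma> b = c \<longleftrightarrow> b = map (inv \<sigma>) c" for b c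
      proof -
        have "c = map \<sigma> b \<longleftrightarrow> b = map (inv \<sigma>) c" by (rule map_inv_eq[OF p])
        moreover have "map \<sigma> b = c \<longleftrightarrow> c = map \<sigma> b" by (rule eq_commute)
        ultimately show ?thesis by (rule trans[rotated])
      qed
      have Pq: "?P p \<sigma> \<longleftrightarrow> p = q" for p
      proof -
        obtain a b where pe: "p = (a, b)" by (cases p)
        have "(map \<sigma> b = i \<and> map \<sigma> a = j) \<longleftrightarrow> (a = map (inv \<sigma>) j \<and> b = map (inv \<sigma>) i)"
          unfolding e1[of b i] e1[of a j] by (rule conj_commute)
        then show ?thesis unfolding pe q_def fst_conv snd_conv prod.inject .
      qed
      have Tq: "T (fst q) (snd q) = T j i"
      proof -
        have "T (map \<sigma> (fst q)) (map \<sigma> (snd q)) = T (fst q) (snd q)" by (rule inv[OF s])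
        moreover have "map \<sigma> (fst q) = j" "map \<sigma> (snd q) = i"
          unfolding q_def by (simp_all add: map_idI permutes_inverses(1)[OF p])
        ultimately show ?thesis by simp
      qed
      have "(\<Sum>p\<in>X. if ?P p \<sigma> then T (fst p) (snd p) / of_nat A else 0)
          = (\<Sum>p\<in>X. if p = q then T (fst p) (snd p) / of_nat A else 0)"
        by (rule sum.cong[OF refl]) (simp only: Pq)
      also have "\<dots> = (if q \<in> X then T (fst q) (snd q) / of_nat A else 0)"
        using fX by simp
      also have "\<dots> = T j i / of_nat A"
      proof (cases "q \<in> X")
        case True then show ?thesis using Tq by simp
      next
        case False
        have "T (fst q) (snd q) = 0"
        proof (rule ccontr)
          assume nz: "T (fst q) (snd q) \<noteq> 0"
          then have "fst q \<in> idx n l" "snd q \<in> idx n k" using supp by blast+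
          then have "q \<in> X" using nz unfolding X_def by (cases q) auto
          then show False using False by simp
        qed
        then show ?thesis using False Tq by simp
      qed
      finally show "(\<Sum>p\<in>X. if ?P p \<sigma> then T (fst p) (snd p) / of_nat A else 0) = T j i / of_nat A" .
    qed
    also have "\<dots> = T j i" using A0 unfolding A_def by simp
    finally show ?thesis by simp
  qed
  have "(\<lambda>j i. \<Sum>p\<in>X. (T (fst p) (snd p) / of_nat A) * Imat G G (snd p) (fst p) j i) \<in> cspan ?S"
  proof (rule cspan_sum[OF fX])
    fix p assume p: "p \<in> X"
    show "(\<lambda>j i. (T (fst p) (snd p) / of_nat A) * Imat G G (snd p) (fst p) j i) \<in> cspan ?S"
      by (rule cspan_scale[OF Imat_span[OF gf ez G Cp[OF p]]])
  qed
  moreover have "T = (\<lambda>j i. \<Sum>p\<in>X. (T (fst p) (snd p) / of_nat A) * Imat G G (snd p) (fst p) j i)"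
    by (intro ext) (rule claim)
  ultimately show "T \<in> cspan ?S" by (simp only:)
qed

theorem theorem4p1:
  fixes F :: fibration and G :: graph and n :: nat
  assumes "graph_fibration F" and "easy_fibration F"
    and "wf_graph G" and "V G = {1..n}"
    and "Fib F G \<noteq> {}"
  shows "\<forall>k l. intertw (Fib F G) (AutG G n) n k l
                = cspan ((\<lambda>(K, a, b). Tmat G K a b) ` Ccat F k l)"
proof (intro allI equalityI)
  fix k l
  show "intertw (Fib F G) (AutG G n) n k l \<subseteq> cspan ((\<lambda>(K, a, b). Tmat G K a b) ` Ccat F k l)"
    by (rule intertw_sub[OF assms])
  show "cspan ((\<lambda>(K, a, b). Tmat G K a b) ` Ccat F k l) \<subseteq> intertw (Fib F G) (AutG G n) n k l"
    by (rule cspan_sub[OF assms])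
qed


end
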